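(* Let $m\ge0$. Let $B_m(\mathbb C)$ (resp. $B_m(\mathbb R)$) act on the space $\mathrm{Her}_m(\mathbb C)$ of $m\times m$ Hermitian matrices (resp. the space $\mathrm{Sym}_m(\mathbb R)$ of real symmetric matrices) by $b\cdot z=bzb^*$ (resp. $b\cdot z=bzb^t$). Then the maps $\tau\mapsto B_m(\mathbb C)\cdot\tau$ and $\tau\mapsto B_m(\mathbb R)\cdot\tau$ are bijections $$\mathrm{SPI}^+_m\xrightarrow{\sim}B_m(\mathbb C)\backslash\mathrm{Her}_m(\mathbb C),\qquad \mathrm{SPI}^+_m\xrightarrow{\sim}B_m(\mathbb R)\backslash\mathrm{Sym}_m(\mathbb R);$$ i.e. $\mathrm{SPI}^+_m$ is a complete system of representatives for both orbit spaces.
   Context: $B_m(\mathbb C)$, $B_m(\mathbb R)$ denote the groups of invertible upper triangular complex, resp. real, $m\times m$ matrices. A signed partial permutation is an $m\times m$ integer matrix with entries in $\{-1,0,1\}$ and at most one nonzero entry in each row and in each column. $\mathrm{SPI}_m$ (signed partial involutions) is the set of symmetric signed partial permutations, and $\mathrm{SPI}^+_m\subset\mathrm{SPI}_m$ is the subset of those whose off-diagonal entries are all nonnegative. *)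

theory Defs
  imports "Jordan_Normal_Form.Matrix" "Jordan_Normal_Form.Schur_Decomposition"
begin

definition borel_mats :: "nat \<Rightarrow> 'a::semiring_1 mat set" where
  "borel_mats m = {b \<in> carrier_mat m m. upper_triangular b \<and> invertible_mat b}"

definition herm_mats :: "nat \<Rightarrow> complex mat set" where
  "herm_mats m = {z \<in> carrier_mat m m. mat_adjoint z = z}"

definition sym_mats :: "nat \<Rightarrow> real mat set" where
  "sym_mats m = {z \<in> carrier_mat m m. transpose_mat z = z}"

definition signed_partial_perm :: "nat \<Rightarrow> int mat \<Rightarrow> bool" where
  "signed_partial_perm m w \<longleftrightarrow> w \<in> carrier_mat m m \<and>
     (\<forall>i<m. \<forall>j<m. w $$ (i,j) \<in> {-1, 0, 1}) \<and>
     (\<forall>i<m. \<forall>j<m. \<forall>k<m. w $$ (i,j) \<noteq> 0 \<and> w $$ (i,k) \<noteq> 0 \<longrightarrow> j = k) \<and>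
     (\<forall>i<m. \<forall>j<m. \<forall>k<m. w $$ (i,j) \<noteq> 0 \<and> w $$ (k,j) \<noteq> 0 \<longrightarrow> i = k)"

definition SPI :: "nat \<Rightarrow> int mat set" where
  "SPI m = {w. signed_partial_perm m w \<and> transpose_mat w = w}"

definition SPI_plus :: "nat \<Rightarrow> int mat set" where
  "SPI_plus m = {w \<in> SPI m. \<forall>i<m. \<forall>j<m. i \<noteq> j \<longrightarrow> w $$ (i,j) \<ge> 0}"

definition herm_orbit :: "nat \<Rightarrow> complex mat \<Rightarrow> complex mat set" where
  "herm_orbit m z = {b * z * mat_adjoint b | b. b \<in> borel_mats m}"

definition sym_orbit :: "nat \<Rightarrow> real mat \<Rightarrow> real mat set" where
  "sym_orbit m z = {b * z * transpose_mat b | b. b \<in> borel_mats m}"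

definition herm_orbit_space :: "nat \<Rightarrow> complex mat set set" where
  "herm_orbit_space m = herm_orbit m ` herm_mats m"

definition sym_orbit_space :: "nat \<Rightarrow> real mat set set" where
  "sym_orbit_space m = sym_orbit m ` sym_mats m"

end

theory Submission
  imports Defs
begin


abbreviation cj :: "'a::conjugatable_field \<Rightarrow> 'a" where "cj \<equiv> conjugate"

lemma cj_one[simp]: "cj (1::'a::conjugatable_field) = 1"
proof -
  have "cj (1::'a) * cj 1 = cj 1" by (metis conjugate_dist_mul mult_1)
  moreover have "cj (1::'a) \<noteq> 0" by simp
  ultimately show ?thesis by (metis mult_cancel_right2)
qed

lemma cj_minus_one[simp]: "cj (-1::'a::conjugatable_field) = -1"
  by (simp add: conjugate_neg)

lemma adj_carrier[simp]: "A \<in> carrier_mat n n \<Longrightarrow> mat_adjoint A \<in> carrier_mat n n"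
  unfolding mat_adjoint_def by auto

lemma adj_index[simp]: "i < dim_col A \<Longrightarrow> j < dim_row A \<Longrightarrow> mat_adjoint A $$ (i,j) = cj (A $$ (j,i))"
  unfolding mat_adjoint_def by (subst mat_of_rows_index) auto

lemma adj_dim[simp]: "dim_row (mat_adjoint A) = dim_col A" "dim_col (mat_adjoint A) = dim_row A"
  unfolding mat_adjoint_def by auto

lemma mult3_index:
  assumes "A \<in> carrier_mat n n" "B \<in> carrier_mat n n" "C \<in> carrier_mat n n" "j < n" "l < n"
  shows "(A * B * C) $$ (j,l) = (\<Sum>p<n. \<Sum>q<n. A $$ (j,p) * B $$ (p,q) * C $$ (q,l))"
proof -
  have "(A * B * C) $$ (j,l) = (\<Sum>p<n. A $$ (j,p) * (\<Sum>q<n. B $$ (p,q) * C $$ (q,l)))"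
    using assms by (simp add: scalar_prod_def lessThan_atLeast0)
  then show ?thesis by (simp add: sum_distrib_left mult.assoc)
qed

definition Gm :: "nat \<Rightarrow> (nat \<Rightarrow> 'a::conjugatable_field) \<Rightarrow> (nat \<Rightarrow> 'a) \<Rightarrow> 'a mat" where
  "Gm n x y = mat n n (\<lambda>(j,l). (if j = l then 1 else 0) + x j * y l)"

lemma Gm_carrier[simp]: "Gm n x y \<in> carrier_mat n n"
  unfolding Gm_def by auto

lemma Gm_dim[simp]: "dim_row (Gm n x y) = n" "dim_col (Gm n x y) = n"
  unfolding Gm_def by auto

lemma Gm_index[simp]: "j < n \<Longrightarrow> l < n \<Longrightarrow> Gm n x y $$ (j,l) = (if j = l then 1 else 0) + x j * y l"
  unfolding Gm_def by auto

lemma sum_delta_r: "l < (n::nat) \<Longrightarrow> (\<Sum>q<n. f q * (if q = l then 1 else 0)) = (f l :: 'a::semiring_1)"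
proof -
  assume l: "l < n"
  have "(\<Sum>q<n. f q * (if q = l then 1 else 0)) = (\<Sum>q<n. if q = l then f q else 0)"
    by (rule sum.cong) auto
  also have "\<dots> = f l" using l by (subst sum.delta[OF finite_lessThan]) auto
  finally show ?thesis .
qed

lemma sum_delta_l: "j < (n::nat) \<Longrightarrow> (\<Sum>p<n. (if j = p then 1 else 0) * f p) = (f j :: 'a::semiring_1)"
proof -
  assume l: "j < n"
  have "(\<Sum>p<n. (if j = p then 1 else 0) * f p) = (\<Sum>p<n. if j = p then f p else 0)"
    by (rule sum.cong) auto
  also have "\<dots> = f j" using l by (subst sum.delta'[OF finite_lessThan]) auto
  finally show ?thesis .
qed

lemma Gm_formula:
  assumes z: "z \<in> carrier_mat n n" and jl: "j < n" "l < n"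
  shows "(Gm n x y * z * mat_adjoint (Gm n x y)) $$ (j,l) =
     z $$ (j,l) + x j * (\<Sum>q<n. y q * z $$ (q,l)) + cj (x l) * (\<Sum>p<n. z $$ (j,p) * cj (y p))
     + x j * cj (x l) * (\<Sum>p<n. \<Sum>q<n. y p * z $$ (p,q) * cj (y q))"
proof -
  define d where "d = (\<lambda>a b::nat. (if a = b then 1 else (0::'a)))"
  define X where "X = cj (x l)"
  have adj: "mat_adjoint (Gm n x y) $$ (q,l) = d q l + X * cj (y q)" if "q < n" for q
    using that jl by (simp add: conjugate_dist_add conjugate_dist_mul d_def X_def)
  have "(Gm n x y * z * mat_adjoint (Gm n x y)) $$ (j,l) =
     (\<Sum>p<n. \<Sum>q<n. (d j p + x j * y p) * z $$ (p,q) * (d q l + X * cj (y q)))"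
    using z jl adj by (subst mult3_index[of _ n]) (auto simp: d_def intro!: sum.cong)
  also have "\<dots> = (\<Sum>p<n. \<Sum>q<n. d j p * (z $$ (p,q) * d q l)
     + d j p * (z $$ (p,q) * (X * cj (y q)))
     + x j * (y p * (z $$ (p,q) * d q l))
     + x j * X * (y p * z $$ (p,q) * cj (y q)))"
    by (intro sum.cong refl) (simp add: distrib_left distrib_right mult.assoc mult.left_commute)
  also have "\<dots> = (\<Sum>p<n. d j p * (\<Sum>q<n. z $$ (p,q) * d q l))
     + (\<Sum>p<n. d j p * (\<Sum>q<n. z $$ (p,q) * (X * cj (y q))))
     + x j * (\<Sum>p<n. y p * (\<Sum>q<n. z $$ (p,q) * d q l))
     + x j * X * (\<Sum>p<n. \<Sum>q<n. y p * z $$ (p,q) * cj (y q))"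
    by (simp only: sum.distrib sum_distrib_left)
  also have "\<dots> = (\<Sum>p<n. d j p * z $$ (p,l))
     + (\<Sum>q<n. z $$ (j,q) * (X * cj (y q)))
     + x j * (\<Sum>p<n. y p * z $$ (p,l))
     + x j * X * (\<Sum>p<n. \<Sum>q<n. y p * z $$ (p,q) * cj (y q))"
  proof -
    have h: "(\<Sum>q<n. z $$ (p,q) * d q l) = z $$ (p,l)" for p
      unfolding d_def by (rule sum_delta_r[OF jl(2)])
    have h2: "(\<Sum>p<n. d j p * (\<Sum>q<n. z $$ (p,q) * (X * cj (y q)))) = (\<Sum>q<n. z $$ (j,q) * (X * cj (y q)))"
      unfolding d_def by (rule sum_delta_l[OF jl(1)])
    show ?thesis by (simp only: h h2)
  qed
  also have "(\<Sum>p<n. d j p * z $$ (p,l)) = z $$ (j,l)"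
    unfolding d_def by (rule sum_delta_l[OF jl(1)])
  also have "(\<Sum>q<n. z $$ (j,q) * (X * cj (y q))) = X * (\<Sum>p<n. z $$ (j,p) * cj (y p))"
    by (simp add: sum_distrib_left mult.left_commute)
  finally show ?thesis by (simp add: X_def mult.commute)
qed

lemma det_ne0_invertible:
  assumes A: "A \<in> carrier_mat n n" and d: "det A \<noteq> (0::'a::field)"
  shows "invertible_mat A"
proof -
  have "A \<in> Units (ring_mat TYPE('a) n undefined)" by (rule det_non_zero_imp_unit[OF A d])
  then obtain B where B: "B \<in> carrier_mat n n" "B * A = 1\<^sub>m n" "A * B = 1\<^sub>m n"
    unfolding Units_def ring_mat_simps by auto
  have "inverts_mat A B" "inverts_mat B A" unfolding inverts_mat_def using A B by auto
  moreover have "square_mat A" using A by auto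
  ultimately show ?thesis unfolding invertible_mat_def by blast
qed

lemma invertible_inverse:
  assumes "invertible_mat A" "A \<in> carrier_mat n n"
  shows "\<exists>B \<in> carrier_mat n n. A * B = 1\<^sub>m n \<and> B * A = 1\<^sub>m n"
proof -
  obtain B where AB: "A * B = 1\<^sub>m (dim_row A)" "B * A = 1\<^sub>m (dim_row B)"
    using assms unfolding invertible_mat_def inverts_mat_def by auto
  have "dim_col B = n" using arg_cong[OF AB(1), of dim_col] assms(2) by simp
  moreover have "dim_row B = n" using arg_cong[OF AB(2), of dim_col] assms(2) by simp
  ultimately show ?thesis using AB assms(2) by (intro bexI[of _ B]) auto
qed

lemma invertible_det:
  assumes "invertible_mat A" "A \<in> carrier_mat n n"
  shows "det A \<noteq> (0::'a::field)"
proof -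
  obtain B where B: "B \<in> carrier_mat n n" "A * B = 1\<^sub>m n" using invertible_inverse[OF assms] by auto
  have "det A * det B = 1" using det_mult[OF assms(2) B(1)] B(2) by simp
  then show ?thesis by auto
qed

lemma upper_triangular_mult:
  assumes "A \<in> carrier_mat n n" "B \<in> carrier_mat n n" "upper_triangular A" "upper_triangular B"
  shows "upper_triangular (A * B)"
  unfolding upper_triangular_def
proof (intro allI impI)
  fix i j assume ij: "i < dim_row (A * B)" "j < i"
  have "(A * B) $$ (i,j) = (\<Sum>k<n. A $$ (i,k) * B $$ (k,j))"
    using assms ij by (simp add: scalar_prod_def lessThan_atLeast0)
  also have "\<dots> = 0"
  proof (rule sum.neutral, intro ballI)
    fix k assume "k \<in> {..<n}"
    show "A $$ (i,k) * B $$ (k,j) = 0"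
    proof (cases "k < i")
      case True then show ?thesis using assms ij by (auto simp: upper_triangular_def)
    next
      case False then show ?thesis using assms ij \<open>k \<in> {..<n}\<close> by (auto simp: upper_triangular_def)
    qed
  qed
  finally show "(A * B) $$ (i,j) = 0" .
qed

lemma borel_carrier: "b \<in> borel_mats n \<Longrightarrow> b \<in> carrier_mat n n"
  unfolding borel_mats_def by auto

lemma borel_one: "1\<^sub>m n \<in> borel_mats n"
  unfolding borel_mats_def upper_triangular_def invertible_mat_def inverts_mat_def
  by (auto intro!: exI[of _ "1\<^sub>m n"])

lemma borel_mult:
  assumes "a \<in> borel_mats n" "b \<in> borel_mats n"
  shows "a * b \<in> borel_mats (n::nat)"
proof -
  have c: "a \<in> carrier_mat n n" "b \<in> carrier_mat n n" using assms by (auto simp: borel_mats_def)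
  obtain a' where a': "a' \<in> carrier_mat n n" "a * a' = 1\<^sub>m n" "a' * a = 1\<^sub>m n"
    using assms invertible_inverse unfolding borel_mats_def by blast
  obtain b' where b': "b' \<in> carrier_mat n n" "b * b' = 1\<^sub>m n" "b' * b = 1\<^sub>m n"
    using assms invertible_inverse unfolding borel_mats_def by blast
  have e1: "b * (b' * a') = a'"
  proof -
    have "b * (b' * a') = (b * b') * a'" by (rule sym, rule assoc_mult_mat[OF c(2) b'(1) a'(1)])
    then show ?thesis using b' a' by simp
  qed
  have 1: "a * b * (b' * a') = 1\<^sub>m n"
    using c a' b' e1 assoc_mult_mat[of a n n b n "b' * a'" n] by simp
  have e2: "a' * (a * b) = b"
  proof -
    have "a' * (a * b) = (a' * a) * b" by (rule sym, rule assoc_mult_mat[OF a'(1) c(1) c(2)])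
    then show ?thesis using c a' by simp
  qed
  have 2: "b' * a' * (a * b) = 1\<^sub>m n"
    using c a' b' e2 assoc_mult_mat[of b' n n a' n "a * b" n] by simp
  have "invertible_mat (a * b)" unfolding invertible_mat_def inverts_mat_def
    using 1 2 c a' b' by (intro conjI exI[of _ "b' * a'"]) auto
  moreover have "upper_triangular (a * b)" using upper_triangular_mult c assms unfolding borel_mats_def by blast
  ultimately show ?thesis using c unfolding borel_mats_def by auto
qed

lemma det_ut_ne0_diag:
  assumes "upper_triangular b" "b \<in> carrier_mat n n" "det b \<noteq> (0::'a::field)" "j < n"
  shows "b $$ (j,j) \<noteq> 0"
  using assms det_upper_triangular[OF assms(1,2)] by (auto simp: diag_mat_def prod_list_zero_iff)

lemma borel_diag_ne0: "b \<in> borel_mats n \<Longrightarrow> j < n \<Longrightarrow> b $$ (j,j) \<noteq> (0::'a::field)"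
  using det_ut_ne0_diag invertible_det unfolding borel_mats_def by blast

lemma borel_ut: "b \<in> borel_mats n \<Longrightarrow> j < n \<Longrightarrow> i < j \<Longrightarrow> b $$ (j,i) = 0"
  unfolding borel_mats_def upper_triangular_def by auto

lemma borel_inv:
  fixes b :: "'a::field mat"
  assumes b: "b \<in> borel_mats n"
  shows "\<exists>c \<in> borel_mats n. c * b = 1\<^sub>m n \<and> b * c = 1\<^sub>m (n::nat)"
proof -
  have bc: "b \<in> carrier_mat n n" using b by (rule borel_carrier)
  obtain c where c: "c \<in> carrier_mat n n" "b * c = 1\<^sub>m n" "c * b = 1\<^sub>m n"
    using b invertible_inverse unfolding borel_mats_def by blast
  have ut: "\<forall>i. j < i \<longrightarrow> i < n \<longrightarrow> c $$ (i,j) = (0::'a)" if "j < n" for j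
    using that
  proof (induction j rule: less_induct)
    case (less j)
    show ?case
    proof (intro allI impI)
      fix i assume ji: "j < i" "i < n"
      have "0 = (c * b) $$ (i,j)" using c ji less.prems by simp
      also have "\<dots> = (\<Sum>k<n. c $$ (i,k) * b $$ (k,j))"
        using c(1) bc ji less.prems by (simp add: scalar_prod_def lessThan_atLeast0)
      also have "\<dots> = c $$ (i,j) * b $$ (j,j) + (\<Sum>k\<in>{..<n} - {j}. c $$ (i,k) * b $$ (k,j))"
        using less.prems by (subst sum.remove[of _ j]) auto
      also have "(\<Sum>k\<in>{..<n} - {j}. c $$ (i,k) * b $$ (k,j)) = 0"
      proof (rule sum.neutral, intro ballI)
        fix k assume k: "k \<in> {..<n} - {j}"
        show "c $$ (i,k) * b $$ (k,j) = 0"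
        proof (cases "k < j")
          case True then show ?thesis using less.IH[of k] ji k by auto
        next
          case False then show ?thesis using borel_ut[OF b, of k j] k by auto
        qed
      qed
      finally have "c $$ (i,j) * b $$ (j,j) = 0" by simp
      then show "c $$ (i,j) = 0" using borel_diag_ne0[OF b less.prems] by simp
    qed
  qed
  have "upper_triangular c" unfolding upper_triangular_def using ut c by auto
  moreover have "invertible_mat c" unfolding invertible_mat_def inverts_mat_def
    using c bc by (intro conjI exI[of _ b]) auto
  ultimately show ?thesis using c by (intro bexI[of _ c]) (auto simp: borel_mats_def)
qed

lemma adj_mult:
  assumes "A \<in> carrier_mat n n" "B \<in> carrier_mat n n"
  shows "mat_adjoint (A * B) = mat_adjoint B * mat_adjoint (A::'a::conjugatable_field mat)"
proof (rule eq_matI)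
  fix i j assume ij: "i < dim_row (mat_adjoint B * mat_adjoint A)" "j < dim_col (mat_adjoint B * mat_adjoint A)"
  then have i: "i < n" and j: "j < n" using assms by auto
  have "mat_adjoint (A * B) $$ (i,j) = cj (\<Sum>k<n. A $$ (j,k) * B $$ (k,i))"
    using assms i j by (simp add: scalar_prod_def lessThan_atLeast0)
  also have "\<dots> = (\<Sum>k<n. cj (B $$ (k,i)) * cj (A $$ (j,k)))"
    by (simp add: sum_conjugate conjugate_dist_mul mult.commute)
  also have "\<dots> = (mat_adjoint B * mat_adjoint A) $$ (i,j)"
    using assms i j by (simp add: scalar_prod_def lessThan_atLeast0)
  finally show "mat_adjoint (A * B) $$ (i,j) = (mat_adjoint B * mat_adjoint A) $$ (i,j)" .
qed (use assms in auto)

lemma adj_one[simp]: "mat_adjoint (1\<^sub>m n :: 'a::conjugatable_field mat) = 1\<^sub>m n"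
  by (intro eq_matI) auto

lemma Gm_borel:
  assumes "\<And>j p. j < n \<Longrightarrow> p < j \<Longrightarrow> x j * y p = 0"
    and "\<And>j. j < n \<Longrightarrow> 1 + x j * y j \<noteq> 0"
  shows "Gm n x y \<in> borel_mats n"
proof -
  have ut: "upper_triangular (Gm n x y)" unfolding upper_triangular_def using assms(1) by auto
  have "det (Gm n x y) = prod_list (diag_mat (Gm n x y))" by (rule det_upper_triangular[OF ut Gm_carrier])
  also have "\<dots> \<noteq> 0" using assms(2) by (auto simp: diag_mat_def prod_list_zero_iff)
  finally show ?thesis using ut det_ne0_invertible[OF Gm_carrier] unfolding borel_mats_def by auto
qed



definition csym :: "nat \<Rightarrow> 'a::conjugatable_field mat \<Rightarrow> bool" where
  "csym n z \<longleftrightarrow> z \<in> carrier_mat n n \<and> (\<forall>j<n. \<forall>l<n. z $$ (j,l) = cj (z $$ (l,j)))"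

definition red :: "nat \<Rightarrow> nat \<Rightarrow> 'a::conjugatable_field mat \<Rightarrow> bool" where
  "red n i z \<longleftrightarrow> (\<forall>j k. i \<le> j \<longrightarrow> j < n \<longrightarrow> i \<le> k \<longrightarrow> k < n \<longrightarrow>
       z $$ (j,k) \<in> {-1,0,1} \<and> (j \<noteq> k \<longrightarrow> z $$ (j,k) \<in> {0,1})) \<and>
     (\<forall>j k l. i \<le> j \<longrightarrow> j < n \<longrightarrow> i \<le> k \<longrightarrow> k < n \<longrightarrow> i \<le> l \<longrightarrow> l < n \<longrightarrow>
       z $$ (j,k) \<noteq> 0 \<longrightarrow> z $$ (j,l) \<noteq> 0 \<longrightarrow> k = l)"

lemma mult_cn[simp]: "A \<in> carrier_mat n n \<Longrightarrow> B \<in> carrier_mat n n \<Longrightarrow> A * B \<in> carrier_mat n n"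
  by (rule mult_carrier_mat)

lemma red_vals: "red n i z \<Longrightarrow> i \<le> j \<Longrightarrow> j < n \<Longrightarrow> i \<le> k \<Longrightarrow> k < n \<Longrightarrow> z $$ (j,k) \<in> {-1,0,1}"
  unfolding red_def by blast

lemma red_off: "red n i z \<Longrightarrow> i \<le> j \<Longrightarrow> j < n \<Longrightarrow> i \<le> k \<Longrightarrow> k < n \<Longrightarrow> j \<noteq> k \<Longrightarrow> z $$ (j,k) \<in> {0,1}"
  unfolding red_def by blast

lemma red_uniq: "red n i z \<Longrightarrow> i \<le> j \<Longrightarrow> j < n \<Longrightarrow> i \<le> k \<Longrightarrow> k < n \<Longrightarrow> i \<le> l \<Longrightarrow> l < n \<Longrightarrow>
   z $$ (j,k) \<noteq> 0 \<Longrightarrow> z $$ (j,l) \<noteq> 0 \<Longrightarrow> k = l"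
  unfolding red_def by blast

lemma csymD: "csym n z \<Longrightarrow> j < n \<Longrightarrow> l < n \<Longrightarrow> z $$ (j,l) = cj (z $$ (l,j))"
  unfolding csym_def by blast

lemma csym_carrier: "csym n z \<Longrightarrow> z \<in> carrier_mat n n"
  unfolding csym_def by blast

lemma csym_iff: "csym n z \<longleftrightarrow> z \<in> carrier_mat n n \<and> mat_adjoint z = z"
proof
  assume z: "csym n z"
  then have c: "z \<in> carrier_mat n n" by (rule csym_carrier)
  have "mat_adjoint z = z"
  proof (rule eq_matI)
    fix i j assume "i < dim_row z" "j < dim_col z"
    then have "i < n" "j < n" using c by auto
    then show "mat_adjoint z $$ (i,j) = z $$ (i,j)" using c csymD[OF z, of i j] by simp
  qed (use c in auto)
  then show "z \<in> carrier_mat n n \<and> mat_adjoint z = z" using c by blast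
next
  assume z: "z \<in> carrier_mat n n \<and> mat_adjoint z = z"
  have "z $$ (j,l) = cj (z $$ (l,j))" if "j < n" "l < n" for j l
  proof -
    have "z $$ (j,l) = mat_adjoint z $$ (j,l)" using z by simp
    also have "\<dots> = cj (z $$ (l,j))" using z that by (subst adj_index) auto
    finally show ?thesis .
  qed
  then show "csym n z" unfolding csym_def using z by blast
qed

lemma adj_adj: "A \<in> carrier_mat n n \<Longrightarrow> mat_adjoint (mat_adjoint A) = (A::'a::conjugatable_field mat)"
  by (intro eq_matI) auto

lemma act_csym:
  assumes b: "b \<in> carrier_mat n n" and z: "csym n z"
  shows "csym n (b * z * mat_adjoint b)"
proof -
  have zc: "z \<in> carrier_mat n n" "mat_adjoint z = z" using z csym_iff by auto
  have "mat_adjoint (b * z * mat_adjoint b) = mat_adjoint (mat_adjoint b) * mat_adjoint (b * z)"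
    using b zc by (subst adj_mult[of _ n]) auto
  also have "\<dots> = b * (mat_adjoint z * mat_adjoint b)"
    using b zc by (simp add: adj_mult[of _ n] adj_adj)
  also have "\<dots> = b * z * mat_adjoint b" using b zc by (metis assoc_mult_mat adj_carrier)
  finally have "mat_adjoint (b * z * mat_adjoint b) = b * z * mat_adjoint b" .
  moreover have "b * z * mat_adjoint b \<in> carrier_mat n n" using b zc by simp
  ultimately show ?thesis unfolding csym_iff by blast
qed

lemma act_comp:
  assumes "b1 \<in> carrier_mat n n" "b2 \<in> carrier_mat n n" "z \<in> carrier_mat n n"
  shows "b2 * (b1 * z * mat_adjoint b1) * mat_adjoint b2 = (b2 * b1) * z * mat_adjoint (b2 * (b1::'a::conjugatable_field mat))"
  using assms by (simp add: adj_mult[of _ n] assoc_mult_mat[of _ n n _ n _ n])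

lemma csym_real: "csym n z \<Longrightarrow> j < n \<Longrightarrow> l < n \<Longrightarrow> z $$ (j,l) \<in> {-1,0,1} \<Longrightarrow> z $$ (l,j) = z $$ (j,l)"
proof -
  assume a: "csym n z" "j < n" "l < n" "z $$ (j,l) \<in> {-1,0,1}"
  have "z $$ (l,j) = cj (z $$ (j,l))" using csymD[OF a(1) a(3) a(2)] .
  also have "\<dots> = z $$ (j,l)" using a(4) by auto
  finally show ?thesis .
qed

lemma inner_sum:
  assumes z: "csym n z" and r: "red n (Suc i) z" and l: "i < l" "l < n" and l': "i < l'" "l' < n"
  shows "(\<Sum>q\<in>{Suc i..<n}. z $$ (q,l') * z $$ (q,l)) =
     (if l' = l \<and> (\<exists>q. i < q \<and> q < n \<and> z $$ (q,l) \<noteq> 0) then 1 else 0)"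
proof (cases "\<exists>q. i < q \<and> q < n \<and> z $$ (q,l) \<noteq> 0")
  case False
  then show ?thesis by (auto intro!: sum.neutral)
next
  case True
  then obtain q0 where q0: "i < q0" "q0 < n" "z $$ (q0,l) \<noteq> 0" by auto
  have uq: "z $$ (q,l) = 0" if "q \<in> {Suc i..<n} - {q0}" for q
  proof (rule ccontr)
    assume "z $$ (q,l) \<noteq> 0"
    then have "z $$ (l,q) \<noteq> 0" "z $$ (l,q0) \<noteq> 0" using csymD[OF z, of l q] csymD[OF z, of l q0] q0 l that by auto
    then have "q = q0" using red_uniq[OF r, of l q q0] l q0 that by auto
    then show False using that by auto
  qed
  have "(\<Sum>q\<in>{Suc i..<n}. z $$ (q,l') * z $$ (q,l)) = z $$ (q0,l') * z $$ (q0,l) +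
      (\<Sum>q\<in>{Suc i..<n} - {q0}. z $$ (q,l') * z $$ (q,l))"
    using q0 by (subst sum.remove[of _ q0]) auto
  also have "(\<Sum>q\<in>{Suc i..<n} - {q0}. z $$ (q,l') * z $$ (q,l)) = 0"
    using uq by (auto intro!: sum.neutral)
  also have "z $$ (q0,l') * z $$ (q0,l) = (if l' = l then 1 else 0)"
  proof (cases "l' = l")
    case True
    have "z $$ (q0,l) \<in> {-1,0,1}" using red_vals[OF r, of q0 l] q0 l by auto
    then show ?thesis using True q0 by auto
  next
    case False
    have "z $$ (q0,l') = 0" using red_uniq[OF r, of q0 l' l] q0 l l' False by auto
    then show ?thesis using False by simp
  qed
  finally show ?thesis using True by simp
qed



lemma sum_upper: "(\<Sum>q<n. if Suc i \<le> q then f q else 0) = (\<Sum>q\<in>{Suc i..<n}. f q :: 'a::comm_monoid_add)"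
proof -
  have "(\<Sum>q<n. if Suc i \<le> q then f q else 0) = (\<Sum>q\<in>{..<n} \<inter> {q. Suc i \<le> q}. f q)"
    by (simp add: sum.If_cases)
  also have "{..<n} \<inter> {q. Suc i \<le> q} = {Suc i..<n}" by auto
  finally show ?thesis .
qed

lemma key_sum:
  assumes z: "csym n z" and r: "red n (Suc i) z" and l: "i < l" "l < n"
  shows "(\<Sum>q<n. (if Suc i \<le> q then - (\<Sum>l'\<in>{Suc i..<n}. z $$ (i,l') * z $$ (q,l')) else 0) * z $$ (q,l))
    = (if \<exists>q. i < q \<and> q < n \<and> z $$ (q,l) \<noteq> 0 then - z $$ (i,l) else 0)"
proof -
  let ?U = "{Suc i..<n}"
  let ?E = "\<exists>q. i < q \<and> q < n \<and> z $$ (q,l) \<noteq> 0"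
  have "(\<Sum>q<n. (if Suc i \<le> q then - (\<Sum>l'\<in>?U. z $$ (i,l') * z $$ (q,l')) else 0) * z $$ (q,l))
     = (\<Sum>q<n. if Suc i \<le> q then - (\<Sum>l'\<in>?U. z $$ (i,l') * z $$ (q,l')) * z $$ (q,l) else 0)"
    by (intro sum.cong) auto
  also have "\<dots> = (\<Sum>q\<in>?U. - (\<Sum>l'\<in>?U. z $$ (i,l') * z $$ (q,l')) * z $$ (q,l))"
    by (rule sum_upper)
  also have "\<dots> = - (\<Sum>q\<in>?U. \<Sum>l'\<in>?U. z $$ (i,l') * (z $$ (q,l') * z $$ (q,l)))"
    by (simp add: sum_distrib_right sum_negf mult.assoc)
  also have "\<dots> = - (\<Sum>l'\<in>?U. z $$ (i,l') * (\<Sum>q\<in>?U. z $$ (q,l') * z $$ (q,l)))"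
    by (subst sum.swap) (simp add: sum_distrib_left)
  also have "\<dots> = - (\<Sum>l'\<in>?U. z $$ (i,l') * (if l' = l \<and> ?E then 1 else 0))"
  proof -
    have "(\<Sum>q\<in>?U. z $$ (q,l') * z $$ (q,l)) = (if l' = l \<and> ?E then 1 else 0)" if "l' \<in> ?U" for l'
      using inner_sum[OF z r l, of l'] that by auto
    then show ?thesis by (intro arg_cong[where f=uminus] sum.cong) auto
  qed
  also have "(\<Sum>l'\<in>?U. z $$ (i,l') * (if l' = l \<and> ?E then 1 else 0)) = (if ?E then z $$ (i,l) else 0)"
  proof (cases ?E)
    case True
    have "(\<Sum>l'\<in>?U. z $$ (i,l') * (if l' = l \<and> ?E then 1 else 0)) = (\<Sum>l'\<in>?U. if l' = l then z $$ (i,l') else 0)"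
      using True by (intro sum.cong) auto
    also have "\<dots> = z $$ (i,l)" using l by (subst sum.delta[OF finite_atLeastLessThan]) auto
    finally show ?thesis using True by simp
  next
    case False
    then have h: "(if l' = l \<and> ?E then 1 else 0) = (0::'a)" for l' by auto
    have "(\<Sum>l'\<in>?U. z $$ (i,l') * (if l' = l \<and> ?E then 1 else 0)) = 0"
      by (simp only: h mult_zero_right sum.neutral_const)
    moreover have "(if ?E then z $$ (i,l) else 0) = 0" using False by (rule if_not_P)
    ultimately show ?thesis by simp
  qed
  finally show ?thesis by (cases ?E) auto
qed

lemma stepA:
  assumes z: "csym n z" and r: "red n (Suc i) z" and i: "i < n"
  shows "\<exists>b\<in>borel_mats n. csym n (b * z * mat_adjoint b) \<and>
    (\<forall>j l. i < j \<longrightarrow> j < n \<longrightarrow> i < l \<longrightarrow> l < n \<longrightarrow> (b * z * mat_adjoint b) $$ (j,l) = z $$ (j,l)) \<and>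
    (\<forall>l. i < l \<longrightarrow> l < n \<longrightarrow> (b * z * mat_adjoint b) $$ (i,l) =
        (if \<exists>q. i < q \<and> q < n \<and> z $$ (q,l) \<noteq> 0 then 0 else z $$ (i,l)))"
proof -
  define x :: "nat \<Rightarrow> 'a" where "x = (\<lambda>j. if j = i then 1 else 0)"
  define y where "y = (\<lambda>q. if Suc i \<le> q then - (\<Sum>l'\<in>{Suc i..<n}. z $$ (i,l') * z $$ (q,l')) else 0)"
  let ?G = "Gm n x y"
  have zc: "z \<in> carrier_mat n n" using z by (rule csym_carrier)
  have G: "?G \<in> borel_mats n"
    by (rule Gm_borel) (auto simp: x_def y_def)
  have cs: "csym n (?G * z * mat_adjoint ?G)" by (rule act_csym[OF Gm_carrier z])
  have blk: "(?G * z * mat_adjoint ?G) $$ (j,l) = z $$ (j,l)" if "i < j" "j < n" "i < l" "l < n" for j l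
    using that by (subst Gm_formula[OF zc]) (auto simp: x_def)
  have row: "(?G * z * mat_adjoint ?G) $$ (i,l) =
        (if \<exists>q. i < q \<and> q < n \<and> z $$ (q,l) \<noteq> 0 then 0 else z $$ (i,l))" if "i < l" "l < n" for l
  proof -
    have "(?G * z * mat_adjoint ?G) $$ (i,l) = z $$ (i,l) + (\<Sum>q<n. y q * z $$ (q,l))"
      using that i by (subst Gm_formula[OF zc]) (auto simp: x_def)
    also have "(\<Sum>q<n. y q * z $$ (q,l)) = (if \<exists>q. i < q \<and> q < n \<and> z $$ (q,l) \<noteq> 0 then - z $$ (i,l) else 0)"
      unfolding y_def by (rule key_sum[OF z r that])
    finally show ?thesis by (cases "\<exists>q. i < q \<and> q < n \<and> z $$ (q,l) \<noteq> 0") auto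
  qed
  show ?thesis using G cs blk row by blast
qed



lemma cj_if: "cj (if P then a else b) = (if P then cj a else cj b)"
  by simp

lemma sum_e1: "k < (n::nat) \<Longrightarrow> (\<Sum>q<n. (if q = k then 1 else 0) * f q) = (f k :: 'a::semiring_1)"
proof -
  assume l: "k < n"
  have "(\<Sum>q<n. (if q = k then 1 else 0) * f q) = (\<Sum>q<n. if q = k then f q else 0)"
    by (rule sum.cong) auto
  also have "\<dots> = f k" using l by (subst sum.delta[OF finite_lessThan]) auto
  finally show ?thesis .
qed

lemma sum_e2: "k < (n::nat) \<Longrightarrow> (\<Sum>q<n. f q * (if q = k then 1 else 0)) = (f k :: 'a::semiring_1)"
proof -
  assume l: "k < n"
  have "(\<Sum>q<n. f q * (if q = k then 1 else 0)) = (\<Sum>q<n. if q = k then f q else 0)"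
    by (rule sum.cong) auto
  also have "\<dots> = f k" using l by (subst sum.delta[OF finite_lessThan]) auto
  finally show ?thesis .
qed

lemma Gm_formula_e:
  assumes z: "z \<in> carrier_mat n n" and jl: "j < n" "l < n" and k: "k < n"
  shows "(Gm n x (\<lambda>q. if q = k then 1 else 0) * z * mat_adjoint (Gm n x (\<lambda>q. if q = k then 1 else 0))) $$ (j,l) =
     z $$ (j,l) + x j * z $$ (k,l) + cj (x l) * z $$ (j,k) + x j * cj (x l) * z $$ (k,k)"
proof -
  have 1: "(\<Sum>q<n. (if q = k then 1 else 0) * z $$ (q,l)) = z $$ (k,l)" by (rule sum_e1[OF k])
  have 2: "(\<Sum>p<n. z $$ (j,p) * cj (if p = k then 1 else 0)) = z $$ (j,k)"
    unfolding cj_if conjugate_zero cj_one by (rule sum_e2[OF k])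
  have 3: "(\<Sum>p<n. \<Sum>q<n. (if p = k then 1 else 0) * z $$ (p,q) * cj (if q = k then 1 else 0)) = z $$ (k,k)"
  proof -
    have "(\<Sum>q<n. (if p = k then 1 else 0) * z $$ (p,q) * cj (if q = k then 1 else 0)) =
       (if p = k then 1 else 0) * z $$ (p,k)" for p
      unfolding cj_if conjugate_zero cj_one by (rule sum_e2[OF k])
    then show ?thesis using sum_e1[OF k, of "\<lambda>p. z $$ (p,k)"] by simp
  qed
  show ?thesis by (subst Gm_formula[OF z jl]) (simp only: 1 2 3)
qed



lemma red_cong:
  assumes r: "red n (Suc i) z" and eq: "\<And>j l. i < j \<Longrightarrow> j < n \<Longrightarrow> i < l \<Longrightarrow> l < n \<Longrightarrow> w $$ (j,l) = z $$ (j,l)"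
  shows "red n (Suc i) w"
proof -
  have e: "w $$ (j,l) = z $$ (j,l)" if "Suc i \<le> j" "j < n" "Suc i \<le> l" "l < n" for j l
    using eq that by auto
  show ?thesis unfolding red_def
  proof (intro conjI allI impI)
    fix j k assume a: "Suc i \<le> j" "j < n" "Suc i \<le> k" "k < n"
    show "w $$ (j,k) \<in> {-1,0,1}" using red_vals[OF r a] e[OF a] by simp
  next
    fix j k assume a: "Suc i \<le> j" "j < n" "Suc i \<le> k" "k < n" and jk: "j \<noteq> k"
    show "w $$ (j,k) \<in> {0,1}" using red_off[OF r a jk] e[OF a] by simp
  next
    fix j k l assume a: "Suc i \<le> j" "j < n" "Suc i \<le> k" "k < n" "Suc i \<le> l" "l < n"
      "w $$ (j,k) \<noteq> 0" "w $$ (j,l) \<noteq> 0"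
    show "k = l" using red_uniq[OF r a(1-6)] a e[OF a(1-4)] e[OF a(1,2,5,6)] by simp
  qed
qed

lemma cj_01: "x \<in> {0,1} \<Longrightarrow> cj x \<in> {0,(1::'a::conjugatable_field)}"
  by auto

lemma red_step:
  assumes w: "csym n w" and r: "red n (Suc i) w" and i: "i < n"
    and d: "w $$ (i,i) \<in> {-1,0,1}"
    and o: "\<And>l. i < l \<Longrightarrow> l < n \<Longrightarrow> w $$ (i,l) \<in> {0,1}"
    and u: "\<And>k l. i \<le> k \<Longrightarrow> k < n \<Longrightarrow> i \<le> l \<Longrightarrow> l < n \<Longrightarrow> w $$ (i,k) \<noteq> 0 \<Longrightarrow> w $$ (i,l) \<noteq> 0 \<Longrightarrow> k = l"
    and zr: "\<And>l q. i < l \<Longrightarrow> l < n \<Longrightarrow> w $$ (i,l) \<noteq> 0 \<Longrightarrow> i < q \<Longrightarrow> q < n \<Longrightarrow> w $$ (l,q) = 0"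
  shows "red n i w"
proof -
  have col: "w $$ (l,i) \<in> {0,1}" if "i < l" "l < n" for l
  proof -
    have "w $$ (l,i) = cj (w $$ (i,l))" using csymD[OF w, of l i] that i by simp
    then show ?thesis using cj_01[OF o[OF that]] by simp
  qed
  have colnz: "w $$ (i,l) \<noteq> 0" if "i < l" "l < n" "w $$ (l,i) \<noteq> 0" for l
    using csymD[OF w, of l i] that i by auto
  show ?thesis unfolding red_def
  proof (intro conjI allI impI)
    fix j k assume a: "i \<le> j" "j < n" "i \<le> k" "k < n"
    show "w $$ (j,k) \<in> {-1,0,1}"
    proof (cases "j = i")
      case True
      then show ?thesis using d o[of k] a by (cases "k = i") auto
    next
      case False
      show ?thesis
      proof (cases "k = i")
        case True then show ?thesis using col[of j] a False by auto
      next
        case False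
        then show ?thesis using red_vals[OF r, of j k] a \<open>j \<noteq> i\<close> by auto
      qed
    qed
  next
    fix j k assume a: "i \<le> j" "j < n" "i \<le> k" "k < n" and jk: "j \<noteq> k"
    show "w $$ (j,k) \<in> {0,1}"
    proof (cases "j = i")
      case True
      then show ?thesis using o[of k] a jk by auto
    next
      case False
      show ?thesis
      proof (cases "k = i")
        case True then show ?thesis using col[of j] a False by auto
      next
        case False
        then show ?thesis using red_off[OF r, of j k] a \<open>j \<noteq> i\<close> jk by auto
      qed
    qed
  next
    fix j k l assume a: "i \<le> j" "j < n" "i \<le> k" "k < n" "i \<le> l" "l < n"
      "w $$ (j,k) \<noteq> 0" "w $$ (j,l) \<noteq> 0"
    show "k = l"
    proof (cases "j = i")
      case True
      then show ?thesis using u a by auto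
    next
      case False
      then have ji: "i < j" using a by auto
      show ?thesis
      proof (cases "k = i")
        case True
        have "w $$ (i,j) \<noteq> 0" using colnz[OF ji a(2)] a(7) True by simp
        then have "l = i" using zr[OF ji a(2) _ , of l] a(5,6,8) by (cases "l = i") auto
        then show ?thesis using True by simp
      next
        case False
        show ?thesis
        proof (cases "l = i")
          case True
          have "w $$ (i,j) \<noteq> 0" using colnz[OF ji a(2)] a(8) True by simp
          then have "k = i" using zr[OF ji a(2) _ , of k] a(3,4,7) by (cases "k = i") auto
          then show ?thesis using False by simp
        next
          case False
          then show ?thesis using red_uniq[OF r, of j k l] a ji \<open>k \<noteq> i\<close> by auto
        qed
      qed
    qed
  qed
qed



lemma cj_minus1: "cj (p - 1) = cj p - (1::'a::conjugatable_field)"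
proof -
  have "cj (p - 1) = cj (p + (-1))" by simp
  also have "\<dots> = cj p + cj (-1)" by (rule conjugate_dist_add)
  finally show ?thesis by simp
qed

lemma stepD:
  fixes z :: "'a::conjugatable_field mat"
  assumes z: "csym n z" and r: "red n (Suc i) z" and i: "i < n"
    and zero: "\<And>l. i < l \<Longrightarrow> l < n \<Longrightarrow> z $$ (i,l) = 0"
    and H1: "\<And>a::'a. cj a = a \<Longrightarrow> a \<noteq> 0 \<Longrightarrow> \<exists>p. p \<noteq> 0 \<and> (p * a * cj p = 1 \<or> p * a * cj p = -1)"
  shows "\<exists>b\<in>borel_mats n. csym n (b * z * mat_adjoint b) \<and> red n i (b * z * mat_adjoint b)"
proof -
  define a where "a = z $$ (i,i)"
  have ca: "cj a = a" unfolding a_def by (rule sym, rule csymD[OF z i i])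
  obtain p where p: "p \<noteq> 0" "p * a * cj p \<in> {-1,0,1}"
  proof (cases "a = 0")
    case True
    then show ?thesis using that[of 1] by simp
  next
    case False
    then obtain p where "p \<noteq> 0" "p * a * cj p = 1 \<or> p * a * cj p = -1" using H1[OF ca] by blast
    then show ?thesis using that[of p] by auto
  qed
  define x where "x = (\<lambda>j. if j = i then p - 1 else (0::'a))"
  define e where "e = (\<lambda>q. if q = i then 1 else (0::'a))"
  define G where "G = Gm n x e"
  define w where "w = G * z * mat_adjoint G"
  have zc: "z \<in> carrier_mat n n" using z by (rule csym_carrier)
  have G: "G \<in> borel_mats n" unfolding G_def
    by (rule Gm_borel) (use p in \<open>auto simp: x_def e_def\<close>)
  have wf: "w $$ (j,l) = z $$ (j,l) + x j * z $$ (i,l) + cj (x l) * z $$ (j,i) + x j * cj (x l) * z $$ (i,i)"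
    if "j < n" "l < n" for j l
    unfolding w_def G_def e_def by (rule Gm_formula_e[OF zc that i])
  have cw: "csym n w" unfolding w_def G_def by (rule act_csym[OF Gm_carrier z])
  have blk: "w $$ (j,l) = z $$ (j,l)" if "i < j" "j < n" "i < l" "l < n" for j l
    using wf[of j l] that by (simp add: x_def)
  have rowi: "w $$ (i,l) = 0" if "i < l" "l < n" for l
    using wf[of i l] that i zero[OF that] by (simp add: x_def)
  have dg: "w $$ (i,i) = p * a * cj p"
  proof -
    have "w $$ (i,i) = a + (p - 1) * a + (cj p - 1) * a + (p - 1) * (cj p - 1) * a"
      using wf[of i i] i by (simp add: x_def a_def cj_minus1)
    also have "\<dots> = p * a * cj p" by (simp add: algebra_simps)
    finally show ?thesis .
  qed
  have rw: "red n (Suc i) w" by (rule red_cong[OF r blk])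
  have "red n i w"
  proof (rule red_step[OF cw rw i])
    show "w $$ (i,i) \<in> {-1,0,1}" using dg p by simp
    show "w $$ (i,l) \<in> {0,1}" if "i < l" "l < n" for l using rowi[OF that] by simp
    show "k = l" if "i \<le> k" "k < n" "i \<le> l" "l < n" "w $$ (i,k) \<noteq> 0" "w $$ (i,l) \<noteq> 0" for k l
    proof -
      have "k = i" using that rowi[of k] by (cases "k = i") auto
      moreover have "l = i" using that rowi[of l] by (cases "l = i") auto
      ultimately show ?thesis by simp
    qed
    show "w $$ (l,q) = 0" if "i < l" "l < n" "w $$ (i,l) \<noteq> 0" "i < q" "q < n" for l q
      using that rowi[of l] by simp
  qed
  then have "csym n (G * z * mat_adjoint G) \<and> red n i (G * z * mat_adjoint G)" using cw unfolding w_def by blast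
  then show ?thesis using G by blast
qed



lemma one_plus_div_ne0: "c \<noteq> 0 \<Longrightarrow> 1 + (1 - c) / c \<noteq> (0::'a::field)"
proof -
  assume c: "c \<noteq> 0"
  have "1 + (1 - c) / c = 1 / c" using c by (simp add: field_simps)
  then show ?thesis using c by simp
qed

lemma stepBC:
  fixes z :: "'a::conjugatable_field mat"
  assumes z: "csym n z" and r: "red n (Suc i) z" and i: "i < n"
    and nz: "\<exists>l. i < l \<and> l < n \<and> z $$ (i,l) \<noteq> 0"
    and cz: "\<And>l q. i < l \<Longrightarrow> l < n \<Longrightarrow> z $$ (i,l) \<noteq> 0 \<Longrightarrow> i < q \<Longrightarrow> q < n \<Longrightarrow> z $$ (q,l) = 0"
    and H2: "\<And>a::'a. cj a = a \<Longrightarrow> \<exists>t. a + t + cj t = 0"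
  shows "\<exists>b\<in>borel_mats n. csym n (b * z * mat_adjoint b) \<and> red n i (b * z * mat_adjoint b)"
proof -
  have zc: "z \<in> carrier_mat n n" using z by (rule csym_carrier)
  define N where "N = {l. i < l \<and> l < n \<and> z $$ (i,l) \<noteq> 0}"
  have fN: "finite N" unfolding N_def by auto
  have neN: "N \<noteq> {}" using nz unfolding N_def by auto
  define k where "k = Max N"
  have kN: "k \<in> N" unfolding k_def using fN neN by (rule Max_in)
  have kmax: "l \<le> k" if "l \<in> N" for l unfolding k_def using fN that by (rule Max_ge)
  have ik: "i < k" "k < n" "z $$ (i,k) \<noteq> 0" using kN unfolding N_def by auto
  have colk: "z $$ (q,k) = 0" if "i < q" "q < n" for q using cz[OF ik that] .
  have rowk: "z $$ (k,q) = 0" if "i < q" "q < n" for q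
  proof -
    have "z $$ (k,q) = cj (z $$ (q,k))" using csymD[OF z ik(2) that(2)] .
    then show ?thesis using colk[OF that] by simp
  qed
  have kk: "z $$ (k,k) = 0" using colk[OF ik(1) ik(2)] .
  have beyond: "z $$ (j,i) = 0" if "k < j" "j < n" for j
  proof -
    have "j \<notin> N" using kmax that by fastforce
    then have "z $$ (i,j) = 0" using that ik unfolding N_def by auto
    moreover have "z $$ (j,i) = cj (z $$ (i,j))" using csymD[OF z that(2)] i by simp
    ultimately show ?thesis by simp
  qed
  define wk where "wk = z $$ (k,i)"
  have wk: "wk \<noteq> 0"
  proof -
    have "wk = cj (z $$ (i,k))" unfolding wk_def using csymD[OF z ik(2) i] .
    then show ?thesis using ik(3) by simp
  qed
  define ek where "ek = (\<lambda>q. if q = k then 1 else (0::'a))"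
  define x where "x = (\<lambda>j. if i < j \<and> j \<le> k then ((if j = k then 1 else 0) - z $$ (j,i)) / wk else 0)"
  define G1 where "G1 = Gm n x ek"
  define z3 where "z3 = G1 * z * mat_adjoint G1"
  have G1: "G1 \<in> borel_mats n" unfolding G1_def
  proof (rule Gm_borel)
    show "x j * ek p = 0" if "j < n" "p < j" for j p using that by (auto simp: x_def ek_def)
    show "1 + x j * ek j \<noteq> 0" if "j < n" for j
      using that one_plus_div_ne0[OF wk] ik wk_def[symmetric] by (auto simp: x_def ek_def)
  qed
  have f3: "z3 $$ (j,l) = z $$ (j,l) + x j * z $$ (k,l) + cj (x l) * z $$ (j,k) + x j * cj (x l) * z $$ (k,k)"
    if "j < n" "l < n" for j l
    unfolding z3_def G1_def ek_def by (rule Gm_formula_e[OF zc that ik(2)])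
  have c3: "csym n z3" unfolding z3_def G1_def by (rule act_csym[OF Gm_carrier z])
  have blk3: "z3 $$ (j,l) = z $$ (j,l)" if "i < j" "j < n" "i < l" "l < n" for j l
    using f3[OF that(2) that(4)] rowk[OF that(3,4)] colk[OF that(1,2)] kk by simp
  have ii3: "z3 $$ (i,i) = z $$ (i,i)"
    using f3[OF i i] by (simp add: x_def)
  have col3: "z3 $$ (j,i) = (if j = k then 1 else 0)" if "i < j" "j < n" for j
  proof (cases "j \<le> k")
    case True
    have "z3 $$ (j,i) = z $$ (j,i) + x j * wk" using f3[OF that(2) i] by (simp add: x_def wk_def)
    also have "\<dots> = (if j = k then 1 else 0)" using True that wk by (simp add: x_def)
    finally show ?thesis .
  next
    case False
    then have "z3 $$ (j,i) = z $$ (j,i)" using f3[OF that(2) i] by (simp add: x_def)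
    then show ?thesis using beyond[of j] False that by simp
  qed
  have row3: "z3 $$ (i,l) = (if l = k then 1 else 0)" if "i < l" "l < n" for l
  proof -
    have "z3 $$ (i,l) = cj (z3 $$ (l,i))" using csymD[OF c3 i that(2)] .
    then show ?thesis using col3[OF that] by simp
  qed
  define a where "a = z $$ (i,i)"
  have ca: "cj a = a" unfolding a_def by (rule sym, rule csymD[OF z i i])
  obtain t where t: "a + t + cj t = 0" using H2[OF ca] by blast
  define x2 where "x2 = (\<lambda>j. if j = i then t else (0::'a))"
  define G2 where "G2 = Gm n x2 ek"
  define z4 where "z4 = G2 * z3 * mat_adjoint G2"
  have z3c: "z3 \<in> carrier_mat n n" using c3 by (rule csym_carrier)
  have G2: "G2 \<in> borel_mats n" unfolding G2_def
  proof (rule Gm_borel)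
    show "x2 j * ek p = 0" if "j < n" "p < j" for j p using that ik by (auto simp: x2_def ek_def)
    show "1 + x2 j * ek j \<noteq> 0" if "j < n" for j using that ik by (auto simp: x2_def ek_def)
  qed
  have f4: "z4 $$ (j,l) = z3 $$ (j,l) + x2 j * z3 $$ (k,l) + cj (x2 l) * z3 $$ (j,k) + x2 j * cj (x2 l) * z3 $$ (k,k)"
    if "j < n" "l < n" for j l
    unfolding z4_def G2_def ek_def by (rule Gm_formula_e[OF z3c that ik(2)])
  have c4: "csym n z4" unfolding z4_def G2_def by (rule act_csym[OF Gm_carrier c3])
  have kk3: "z3 $$ (k,k) = 0" using blk3[OF ik(1,2) ik(1,2)] kk by simp
  have blk4: "z4 $$ (j,l) = z $$ (j,l)" if "i < j" "j < n" "i < l" "l < n" for j l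
    using f4[OF that(2) that(4)] blk3[OF that] that by (simp add: x2_def)
  have row4: "z4 $$ (i,l) = (if l = k then 1 else 0)" if "i < l" "l < n" for l
  proof -
    have "z3 $$ (k,l) = 0" using blk3[OF ik(1,2) that] rowk[OF that] by simp
    then show ?thesis using f4[OF i that(2)] row3[OF that] that by (simp add: x2_def)
  qed
  have ii4: "z4 $$ (i,i) = 0"
  proof -
    have "z4 $$ (i,i) = a + t * 1 + cj t * 1 + t * cj t * 0"
      using f4[OF i i] ii3 col3[OF ik(1,2)] row3[OF ik(1,2)] kk3 by (simp add: x2_def a_def)
    then show ?thesis using t by simp
  qed
  have rw: "red n (Suc i) z4" by (rule red_cong[OF r blk4])
  have "red n i z4"
  proof (rule red_step[OF c4 rw i])
    show "z4 $$ (i,i) \<in> {-1,0,1}" using ii4 by simp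
    show "z4 $$ (i,l) \<in> {0,1}" if "i < l" "l < n" for l using row4[OF that] by simp
    show "k' = l" if "i \<le> k'" "k' < n" "i \<le> l" "l < n" "z4 $$ (i,k') \<noteq> 0" "z4 $$ (i,l) \<noteq> 0" for k' l
    proof -
      have "k' = k"
      proof (cases "k' = i")
        case True then show ?thesis using that ii4 by simp
      next
        case False then show ?thesis using that row4[of k'] by (cases "k' = k") auto
      qed
      moreover have "l = k"
      proof (cases "l = i")
        case True then show ?thesis using that ii4 by simp
      next
        case False then show ?thesis using that row4[of l] by (cases "l = k") auto
      qed
      ultimately show ?thesis by simp
    qed
    show "z4 $$ (l,q) = 0" if "i < l" "l < n" "z4 $$ (i,l) \<noteq> 0" "i < q" "q < n" for l q
    proof -
      have "l = k" using that row4[of l] by (cases "l = k") auto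
      then show ?thesis using blk4[of l q] that rowk[of q] by simp
    qed
  qed
  have G21: "G2 * G1 \<in> borel_mats n" by (rule borel_mult[OF G2 G1])
  have "z4 = (G2 * G1) * z * mat_adjoint (G2 * G1)"
    unfolding z4_def z3_def by (rule act_comp[OF borel_carrier[OF G1] borel_carrier[OF G2] zc])
  then show ?thesis using G21 c4 \<open>red n i z4\<close> by metis
qed



lemma act_one: "z \<in> carrier_mat n n \<Longrightarrow> 1\<^sub>m n * z * mat_adjoint (1\<^sub>m n) = (z::'a::conjugatable_field mat)"
  by simp

lemma core_step:
  fixes z :: "'a::conjugatable_field mat"
  assumes z: "csym n z" and r: "red n (Suc i) z" and i: "i < n"
    and H1: "\<And>a::'a. cj a = a \<Longrightarrow> a \<noteq> 0 \<Longrightarrow> \<exists>p. p \<noteq> 0 \<and> (p * a * cj p = 1 \<or> p * a * cj p = -1)"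
    and H2: "\<And>a::'a. cj a = a \<Longrightarrow> \<exists>t. a + t + cj t = 0"
  shows "\<exists>b\<in>borel_mats n. csym n (b * z * mat_adjoint b) \<and> red n i (b * z * mat_adjoint b)"
proof -
  have zc: "z \<in> carrier_mat n n" using z by (rule csym_carrier)
  obtain b1 where b1: "b1 \<in> borel_mats n" and c2: "csym n (b1 * z * mat_adjoint b1)"
    and blk: "\<And>j l. i < j \<Longrightarrow> j < n \<Longrightarrow> i < l \<Longrightarrow> l < n \<Longrightarrow> (b1 * z * mat_adjoint b1) $$ (j,l) = z $$ (j,l)"
    and row: "\<And>l. i < l \<Longrightarrow> l < n \<Longrightarrow> (b1 * z * mat_adjoint b1) $$ (i,l) =
        (if \<exists>q. i < q \<and> q < n \<and> z $$ (q,l) \<noteq> 0 then 0 else z $$ (i,l))"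
    using stepA[OF z r i] by blast
  define z2 where "z2 = b1 * z * mat_adjoint b1"
  have c2': "csym n z2" using c2 unfolding z2_def .
  have r2: "red n (Suc i) z2" unfolding z2_def by (rule red_cong[OF r blk])
  have "\<exists>b\<in>borel_mats n. csym n (b * z2 * mat_adjoint b) \<and> red n i (b * z2 * mat_adjoint b)"
  proof (cases "\<exists>l. i < l \<and> l < n \<and> z2 $$ (i,l) \<noteq> 0")
    case True
    show ?thesis
    proof (rule stepBC[OF c2' r2 i True _ H2])
      fix l q assume a: "i < l" "l < n" "z2 $$ (i,l) \<noteq> 0" "i < q" "q < n"
      have "\<not> (\<exists>q. i < q \<and> q < n \<and> z $$ (q,l) \<noteq> 0)"
        using a row[OF a(1,2)] unfolding z2_def by (cases "\<exists>q. i < q \<and> q < n \<and> z $$ (q,l) \<noteq> 0") auto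
      then have "z $$ (q,l) = 0" using a by blast
      then show "z2 $$ (q,l) = 0" using blk[OF a(4,5,1,2)] unfolding z2_def by simp
    qed
  next
    case False
    then have "z2 $$ (i,l) = 0" if "i < l" "l < n" for l using that by blast
    then show ?thesis using stepD[OF c2' r2 i _ H1] by blast
  qed
  then obtain b2 where b2: "b2 \<in> borel_mats n" "csym n (b2 * z2 * mat_adjoint b2)" "red n i (b2 * z2 * mat_adjoint b2)"
    by blast
  have eq: "b2 * z2 * mat_adjoint b2 = (b2 * b1) * z * mat_adjoint (b2 * b1)"
    unfolding z2_def by (rule act_comp[OF borel_carrier[OF b1] borel_carrier[OF b2(1)] zc])
  show ?thesis using b2 borel_mult[OF b2(1) b1] unfolding eq by blast
qed

lemma red_top: "red n n z"
  unfolding red_def by auto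

lemma reduction:
  fixes z :: "'a::conjugatable_field mat"
  assumes H1: "\<And>a::'a. cj a = a \<Longrightarrow> a \<noteq> 0 \<Longrightarrow> \<exists>p. p \<noteq> 0 \<and> (p * a * cj p = 1 \<or> p * a * cj p = -1)"
    and H2: "\<And>a::'a. cj a = a \<Longrightarrow> \<exists>t. a + t + cj t = 0"
  shows "d \<le> n \<Longrightarrow> csym n z \<Longrightarrow> \<exists>b\<in>borel_mats n. csym n (b * z * mat_adjoint b) \<and> red n (n - d) (b * z * mat_adjoint b)"
proof (induction d arbitrary: z)
  case 0
  have "1\<^sub>m n * z * mat_adjoint (1\<^sub>m n) = z" using csym_carrier[OF 0(2)] by simp
  then show ?case using borel_one[of n] 0(2) red_top[of n z] by (metis diff_zero)
next
  case (Suc d)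
  have zc: "z \<in> carrier_mat n n" using Suc.prems(2) by (rule csym_carrier)
  obtain b1 where b1: "b1 \<in> borel_mats n" "csym n (b1 * z * mat_adjoint b1)" "red n (n - d) (b1 * z * mat_adjoint b1)"
    using Suc.IH[OF _ Suc.prems(2)] Suc.prems(1) by auto
  define i where "i = n - Suc d"
  have i: "i < n" "Suc i = n - d" using Suc.prems(1) unfolding i_def by auto
  obtain b2 where b2: "b2 \<in> borel_mats n" "csym n (b2 * (b1 * z * mat_adjoint b1) * mat_adjoint b2)"
      "red n i (b2 * (b1 * z * mat_adjoint b1) * mat_adjoint b2)"
    using core_step[OF b1(2) _ i(1) H1 H2] b1(3) i(2) by auto
  have eq: "b2 * (b1 * z * mat_adjoint b1) * mat_adjoint b2 = (b2 * b1) * z * mat_adjoint (b2 * b1)"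
    by (rule act_comp[OF borel_carrier[OF b1(1)] borel_carrier[OF b2(1)] zc])
  show ?case using b2 borel_mult[OF b2(1) b1(1)] unfolding eq i_def by blast
qed

lemma reduction0:
  fixes z :: "'a::conjugatable_field mat"
  assumes H1: "\<And>a::'a. cj a = a \<Longrightarrow> a \<noteq> 0 \<Longrightarrow> \<exists>p. p \<noteq> 0 \<and> (p * a * cj p = 1 \<or> p * a * cj p = -1)"
    and H2: "\<And>a::'a. cj a = a \<Longrightarrow> \<exists>t. a + t + cj t = 0"
    and z: "csym n z"
  shows "\<exists>b\<in>borel_mats n. csym n (b * z * mat_adjoint b) \<and> red n 0 (b * z * mat_adjoint b)"
  using reduction[OF H1 H2 _ z, of n] by simp



lemma eq_entry:
  fixes b c Z Z' :: "'a::conjugatable_field mat"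
  assumes b: "b \<in> carrier_mat n n" and c: "c \<in> carrier_mat n n" and Z: "Z \<in> carrier_mat n n"
    and cb: "c * b = 1\<^sub>m n" and Z': "Z' = b * Z * mat_adjoint b"
    and ik: "i < n" "k < n"
  shows "(\<Sum>q<n. Z' $$ (i,q) * cj (c $$ (k,q))) = (\<Sum>p<n. b $$ (i,p) * Z $$ (p,k))"
proof -
  have "Z' * mat_adjoint c = b * Z * (mat_adjoint b * mat_adjoint c)"
    unfolding Z' using b c Z by (simp add: assoc_mult_mat[of _ n n _ n _ n])
  also have "mat_adjoint b * mat_adjoint c = 1\<^sub>m n"
    using adj_mult[OF c b] cb by simp
  also have "b * Z * 1\<^sub>m n = b * Z" using b Z by simp
  finally have e: "Z' * mat_adjoint c = b * Z" .
  have "(Z' * mat_adjoint c) $$ (i,k) = (\<Sum>q<n. Z' $$ (i,q) * cj (c $$ (k,q)))"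
    unfolding Z' using b c Z ik by (simp add: scalar_prod_def lessThan_atLeast0)
  moreover have "(b * Z) $$ (i,k) = (\<Sum>p<n. b $$ (i,p) * Z $$ (p,k))"
    using b Z ik by (simp add: scalar_prod_def lessThan_atLeast0)
  ultimately show ?thesis using e by simp
qed

lemma col_uniq:
  assumes Z: "csym n Z" and r: "red n 0 Z" and a: "p < n" "q < n" "k < n" "Z $$ (p,k) \<noteq> 0" "Z $$ (q,k) \<noteq> 0"
  shows "p = q"
proof -
  have "Z $$ (k,p) \<noteq> 0" using csymD[OF Z a(3) a(1)] a(4) by simp
  moreover have "Z $$ (k,q) \<noteq> 0" using csymD[OF Z a(3) a(2)] a(5) by simp
  ultimately show ?thesis using red_uniq[OF r, of k p q] a by simp
qed

lemma offd:
  fixes b c Z Z' :: "'a::conjugatable_field mat"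
  assumes Z: "csym n Z" "red n 0 Z" and b: "b \<in> borel_mats n" and c: "c \<in> borel_mats n"
    and EQ: "(\<Sum>q<n. Z' $$ (i,q) * cj (c $$ (k,q))) = (\<Sum>p<n. b $$ (i,p) * Z $$ (p,k))"
    and ik: "i < k" "k < n" and nz: "Z $$ (i,k) \<noteq> 0"
  shows "\<exists>q. k \<le> q \<and> q < n \<and> Z' $$ (i,q) \<noteq> 0"
proof -
  have i: "i < n" using ik by simp
  have "(\<Sum>p<n. b $$ (i,p) * Z $$ (p,k)) = b $$ (i,i) * Z $$ (i,k) + (\<Sum>p\<in>{..<n} - {i}. b $$ (i,p) * Z $$ (p,k))"
    using i by (subst sum.remove[of _ i]) auto
  also have "(\<Sum>p\<in>{..<n} - {i}. b $$ (i,p) * Z $$ (p,k)) = 0"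
  proof (rule sum.neutral, intro ballI)
    fix p assume p: "p \<in> {..<n} - {i}"
    have "Z $$ (p,k) = 0" using col_uniq[OF Z, of p i k] p nz ik by auto
    then show "b $$ (i,p) * Z $$ (p,k) = 0" by simp
  qed
  finally have "(\<Sum>p<n. b $$ (i,p) * Z $$ (p,k)) \<noteq> 0"
    using borel_diag_ne0[OF b i] nz by simp
  then have "(\<Sum>q<n. Z' $$ (i,q) * cj (c $$ (k,q))) \<noteq> 0" using EQ by simp
  then obtain q where q: "q < n" "Z' $$ (i,q) * cj (c $$ (k,q)) \<noteq> 0"
    by (meson lessThan_iff sum.neutral)
  have "\<not> q < k"
  proof
    assume "q < k"
    then have "c $$ (k,q) = 0" using borel_ut[OF c ik(2)] by simp
    then show False using q by simp
  qed
  then have "k \<le> q" by simp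
  then show ?thesis using q by (intro exI[of _ q]) auto
qed

lemma sign_lemma:
  fixes p x x' :: "'a::conjugatable_field"
  assumes H3: "\<And>p::'a. p \<noteq> 0 \<Longrightarrow> p * cj p \<noteq> -1"
    and p: "p \<noteq> 0" and x: "x \<in> {-1,0,1}" and x': "x' \<in> {-1,0,1}" and e: "x' = p * x * cj p"
  shows "x = x'"
proof -
  define s where "s = p * cj p"
  have s0: "s \<noteq> 0" using p unfolding s_def by simp
  have s1: "s \<noteq> -1" using H3[OF p] unfolding s_def .
  have e': "x' = x * s" unfolding s_def e by (simp add: algebra_simps)
  show ?thesis
  proof (cases "x = 0")
    case True then show ?thesis using e' by simp
  next
    case False
    show ?thesis
    proof (cases "x = 1")
      case True
      then have "x' = s" using e' by simp
      then show ?thesis using x' s0 s1 True by auto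
    next
      case False
      then have xm: "x = -1" using x \<open>x \<noteq> 0\<close> by auto
      then have "x' = - s" using e' by simp
      moreover have "- s \<noteq> 1" using s1 by (metis minus_minus)
      moreover have "- s \<noteq> 0" using s0 by simp
      ultimately show ?thesis using x' xm by auto
    qed
  qed
qed



lemma off_transfer:
  fixes b c Z Z' :: "'a::conjugatable_field mat"
  assumes Z: "csym n Z" "red n 0 Z" and Z': "csym n Z'" "red n 0 Z'"
    and b: "b \<in> borel_mats n" and c: "c \<in> borel_mats n"
    and EQ1: "\<And>i k. i < n \<Longrightarrow> k < n \<Longrightarrow> (\<Sum>q<n. Z' $$ (i,q) * cj (c $$ (k,q))) = (\<Sum>p<n. b $$ (i,p) * Z $$ (p,k))"
    and EQ2: "\<And>i k. i < n \<Longrightarrow> k < n \<Longrightarrow> (\<Sum>q<n. Z $$ (i,q) * cj (b $$ (k,q))) = (\<Sum>p<n. c $$ (i,p) * Z' $$ (p,k))"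
    and ik: "i < k" "k < n" and nz: "Z $$ (i,k) \<noteq> 0"
  shows "Z' $$ (i,k) \<noteq> 0"
proof -
  have i: "i < n" using ik by simp
  obtain q where q: "k \<le> q" "q < n" "Z' $$ (i,q) \<noteq> 0"
    using offd[OF Z b c EQ1[OF i ik(2)] ik nz] by blast
  have iq: "i < q" using q ik by simp
  obtain q' where q': "q \<le> q'" "q' < n" "Z $$ (i,q') \<noteq> 0"
    using offd[OF Z' c b EQ2[OF i q(2)] iq q(2) q(3)] by blast
  have "k = q'" using red_uniq[OF Z(2), of i k q'] i ik q' nz by simp
  then have "q = k" using q q' by simp
  then show ?thesis using q by simp
qed

lemma canon_unique:
  fixes b Z Z' :: "'a::conjugatable_field mat"
  assumes H3: "\<And>p::'a. p \<noteq> 0 \<Longrightarrow> p * cj p \<noteq> -1"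
    and Z: "csym n Z" "red n 0 Z" and Z': "csym n Z'" "red n 0 Z'"
    and b: "b \<in> borel_mats n" and e: "Z' = b * Z * mat_adjoint b"
  shows "Z = Z'"
proof -
  obtain c where c: "c \<in> borel_mats n" "c * b = 1\<^sub>m n" "b * c = 1\<^sub>m n" using borel_inv[OF b] by blast
  have bc: "b \<in> carrier_mat n n" "c \<in> carrier_mat n n" using b c by (auto simp: borel_carrier)
  have Zc: "Z \<in> carrier_mat n n" "Z' \<in> carrier_mat n n" using Z(1) Z'(1) by (auto simp: csym_carrier)
  have e2: "Z = c * Z' * mat_adjoint c"
  proof -
    have "c * Z' * mat_adjoint c = (c * b) * Z * mat_adjoint (c * b)"
      unfolding e by (rule act_comp[OF bc(1) bc(2) Zc(1)])
    also have "\<dots> = Z" using c(2) Zc(1) by simp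
    finally show ?thesis by simp
  qed
  have EQ1: "(\<Sum>q<n. Z' $$ (i,q) * cj (c $$ (k,q))) = (\<Sum>p<n. b $$ (i,p) * Z $$ (p,k))"
    if "i < n" "k < n" for i k by (rule eq_entry[OF bc(1) bc(2) Zc(1) c(2) e that])
  have EQ2: "(\<Sum>q<n. Z $$ (i,q) * cj (b $$ (k,q))) = (\<Sum>p<n. c $$ (i,p) * Z' $$ (p,k))"
    if "i < n" "k < n" for i k by (rule eq_entry[OF bc(2) bc(1) Zc(2) c(3) e2 that])
  have up: "Z $$ (i,k) = Z' $$ (i,k)" if "i < k" "k < n" for i k
  proof -
    have "Z $$ (i,k) \<noteq> 0 \<longleftrightarrow> Z' $$ (i,k) \<noteq> 0"
      using off_transfer[OF Z Z' b c(1) EQ1 EQ2 that] off_transfer[OF Z' Z c(1) b EQ2 EQ1 that] by blast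
    moreover have "Z $$ (i,k) \<in> {0,1}" "Z' $$ (i,k) \<in> {0,1}"
      using red_off[OF Z(2), of i k] red_off[OF Z'(2), of i k] that by auto
    ultimately show ?thesis by auto
  qed
  have off: "Z $$ (i,k) = Z' $$ (i,k)" if "i < n" "k < n" "i \<noteq> k" for i k
  proof (cases "i < k")
    case True then show ?thesis using up that by simp
  next
    case False
    then have ki: "k < i" using that by simp
    have "Z $$ (i,k) = cj (Z $$ (k,i))" by (rule csymD[OF Z(1) that(1,2)])
    also have "\<dots> = cj (Z' $$ (k,i))" using up[OF ki that(1)] by simp
    also have "\<dots> = Z' $$ (i,k)" by (rule sym, rule csymD[OF Z'(1) that(1,2)])
    finally show ?thesis .
  qed
  have dg: "Z $$ (i,i) = Z' $$ (i,i)" if i: "i < n" for i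
  proof (cases "\<exists>k<n. k \<noteq> i \<and> Z $$ (i,k) \<noteq> 0")
    case True
    then obtain k where k: "k < n" "k \<noteq> i" "Z $$ (i,k) \<noteq> 0" by blast
    have k': "Z' $$ (i,k) \<noteq> 0" using off[OF i k(1)] k by simp
    have "Z $$ (i,i) = 0" using red_uniq[OF Z(2), of i i k] i k by (cases "Z $$ (i,i) = 0") auto
    moreover have "Z' $$ (i,i) = 0" using red_uniq[OF Z'(2), of i i k] i k k' by (cases "Z' $$ (i,i) = 0") auto
    ultimately show ?thesis by simp
  next
    case False
    then have r0: "Z $$ (i,k) = 0" if "k < n" "k \<noteq> i" for k using that by blast
    have r0': "Z' $$ (i,k) = 0" if "k < n" "k \<noteq> i" for k using r0[OF that] off[OF i that(1)] that by simp
    have c0: "Z $$ (p,i) = 0" if "p < n" "p \<noteq> i" for p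
      using csymD[OF Z(1) that(1) i] r0[OF that] by simp
    define T where "T = (\<lambda>q. (\<Sum>p<n. b $$ (i,p) * Z $$ (p,q)) * cj (b $$ (i,q)))"
    have "Z' $$ (i,i) = (\<Sum>p<n. \<Sum>q<n. b $$ (i,p) * Z $$ (p,q) * mat_adjoint b $$ (q,i))"
      unfolding e by (rule mult3_index[OF bc(1) Zc(1) adj_carrier[OF bc(1)] i i])
    also have "\<dots> = (\<Sum>q<n. T q)"
      unfolding T_def using bc(1) i by (subst sum.swap) (auto simp: sum_distrib_right intro!: sum.cong)
    also have "\<dots> = T i + (\<Sum>q\<in>{..<n} - {i}. T q)" using i by (subst sum.remove[of _ i]) auto
    also have "(\<Sum>q\<in>{..<n} - {i}. T q) = 0"
    proof (rule sum.neutral, intro ballI)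
      fix q assume q: "q \<in> {..<n} - {i}"
      show "T q = 0"
      proof (cases "q < i")
        case True
        then have "b $$ (i,q) = 0" using borel_ut[OF b i] by simp
        then show ?thesis unfolding T_def by simp
      next
        case False
        then have iq: "i < q" "q < n" using q by auto
        have "(\<Sum>p<n. b $$ (i,p) * Z $$ (p,q)) = (\<Sum>r<n. Z' $$ (i,r) * cj (c $$ (q,r)))"
          using EQ1[OF i iq(2)] by simp
        also have "\<dots> = Z' $$ (i,i) * cj (c $$ (q,i)) + (\<Sum>r\<in>{..<n} - {i}. Z' $$ (i,r) * cj (c $$ (q,r)))"
          using i by (subst sum.remove[of _ i]) auto
        also have "(\<Sum>r\<in>{..<n} - {i}. Z' $$ (i,r) * cj (c $$ (q,r))) = 0"
          using r0' by (intro sum.neutral) auto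
        also have "c $$ (q,i) = 0" using borel_ut[OF c(1) iq(2) iq(1)] .
        finally show ?thesis unfolding T_def by simp
      qed
    qed
    also have "T i = b $$ (i,i) * Z $$ (i,i) * cj (b $$ (i,i))"
    proof -
      have "(\<Sum>p<n. b $$ (i,p) * Z $$ (p,i)) = b $$ (i,i) * Z $$ (i,i) + (\<Sum>p\<in>{..<n} - {i}. b $$ (i,p) * Z $$ (p,i))"
        using i by (subst sum.remove[of _ i]) auto
      also have "(\<Sum>p\<in>{..<n} - {i}. b $$ (i,p) * Z $$ (p,i)) = 0"
        using c0 by (intro sum.neutral) auto
      finally show ?thesis unfolding T_def by simp
    qed
    finally have ee: "Z' $$ (i,i) = b $$ (i,i) * Z $$ (i,i) * cj (b $$ (i,i))" by simp
    have v1: "Z $$ (i,i) \<in> {-1,0,1}" using red_vals[OF Z(2), of i i] i by simp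
    have v2: "Z' $$ (i,i) \<in> {-1,0,1}" using red_vals[OF Z'(2), of i i] i by simp
    show ?thesis by (rule sign_lemma[OF H3 borel_diag_ne0[OF b i] v1 v2 ee])
  qed
  show ?thesis
  proof (rule eq_matI)
    fix i j assume "i < dim_row Z'" "j < dim_col Z'"
    then have ij: "i < n" "j < n" using Zc by auto
    show "Z $$ (i,j) = Z' $$ (i,j)" using off[OF ij] dg[OF ij(1)] by (cases "i = j") auto
  qed (use Zc in auto)
qed



definition orb :: "nat \<Rightarrow> 'a::conjugatable_field mat \<Rightarrow> 'a mat set" where
  "orb n z = {b * z * mat_adjoint b | b. b \<in> borel_mats n}"

lemma orb_self: "z \<in> carrier_mat n n \<Longrightarrow> z \<in> orb n z"
  unfolding orb_def using borel_one[of n] by (intro CollectI exI[of _ "1\<^sub>m n"]) simp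

lemma orb_act:
  assumes b: "b \<in> borel_mats n" and z: "z \<in> carrier_mat n n"
  shows "orb n (b * z * mat_adjoint b) = orb n (z::'a::conjugatable_field mat)"
proof
  have bc: "b \<in> carrier_mat n n" using b by (rule borel_carrier)
  show "orb n (b * z * mat_adjoint b) \<subseteq> orb n z"
  proof
    fix w assume "w \<in> orb n (b * z * mat_adjoint b)"
    then obtain b' where b': "b' \<in> borel_mats n" "w = b' * (b * z * mat_adjoint b) * mat_adjoint b'"
      unfolding orb_def by blast
    have "w = (b' * b) * z * mat_adjoint (b' * b)"
      unfolding b'(2) by (rule act_comp[OF bc borel_carrier[OF b'(1)] z])
    then show "w \<in> orb n z" unfolding orb_def using borel_mult[OF b'(1) b] by blast
  qed
  show "orb n z \<subseteq> orb n (b * z * mat_adjoint b)"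
  proof
    fix w assume "w \<in> orb n z"
    then obtain b' where b': "b' \<in> borel_mats n" "w = b' * z * mat_adjoint b'"
      unfolding orb_def by blast
    obtain c where c: "c \<in> borel_mats n" "c * b = 1\<^sub>m n" using borel_inv[OF b] by blast
    have cc: "c \<in> carrier_mat n n" "b' \<in> carrier_mat n n" using c b' by (auto simp: borel_carrier)
    have e: "(b' * c) * b = b'"
      using cc bc c(2) by (simp add: assoc_mult_mat[of _ n n _ n _ n])
    have "(b' * c) * (b * z * mat_adjoint b) * mat_adjoint (b' * c) = ((b' * c) * b) * z * mat_adjoint ((b' * c) * b)"
      by (rule act_comp[OF bc _ z]) (use cc in simp)
    also have "\<dots> = w" unfolding e b'(2) ..
    finally show "w \<in> orb n (b * z * mat_adjoint b)"
      unfolding orb_def using borel_mult[OF b'(1) c(1)] by blast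
  qed
qed

lemma of_int_cases: "x \<in> {-1,0,1} \<Longrightarrow> (of_int x :: 'a::ring_1) \<in> {-1,0,1}"
  by auto

lemma spp_parts:
  assumes "signed_partial_perm n w"
  shows "w \<in> carrier_mat n n" "\<forall>i<n. \<forall>j<n. w $$ (i,j) \<in> {-1, 0, 1}"
    "\<forall>i<n. \<forall>j<n. \<forall>k<n. w $$ (i,j) \<noteq> 0 \<and> w $$ (i,k) \<noteq> 0 \<longrightarrow> j = k"
    "\<forall>i<n. \<forall>j<n. \<forall>k<n. w $$ (i,j) \<noteq> 0 \<and> w $$ (k,j) \<noteq> 0 \<longrightarrow> i = k"
  using assms unfolding signed_partial_perm_def
  by (rule conjunct1, rule conjunct1[OF conjunct2], rule conjunct1[OF conjunct2[OF conjunct2]],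
      rule conjunct2[OF conjunct2[OF conjunct2]])

lemma spp_vals: "signed_partial_perm n w \<Longrightarrow> i < n \<Longrightarrow> j < n \<Longrightarrow> w $$ (i,j) \<in> {-1,0,1}"
  using spp_parts(2) by blast

lemma spp_row: "signed_partial_perm n w \<Longrightarrow> i < n \<Longrightarrow> j < n \<Longrightarrow> k < n \<Longrightarrow> w $$ (i,j) \<noteq> 0 \<Longrightarrow> w $$ (i,k) \<noteq> 0 \<Longrightarrow> j = k"
  using spp_parts(3) by blast

lemma spi_canon:
  assumes t: "\<tau> \<in> SPI_plus n"
  shows "csym n (map_mat of_int \<tau> :: 'a::conjugatable_field mat) \<and> red n 0 (map_mat of_int \<tau> :: 'a mat)"
proof -
  let ?Z = "map_mat of_int \<tau> :: 'a mat"
  have t': "signed_partial_perm n \<tau> \<and> transpose_mat \<tau> = \<tau> \<and> (\<forall>i<n. \<forall>j<n. i \<noteq> j \<longrightarrow> \<tau> $$ (i,j) \<ge> 0)"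
    using t unfolding SPI_plus_def SPI_def by blast
  have sp: "signed_partial_perm n \<tau>" and tr: "transpose_mat \<tau> = \<tau>" using t' by blast+
  have pos: "\<And>j k. j < n \<Longrightarrow> k < n \<Longrightarrow> j \<noteq> k \<Longrightarrow> \<tau> $$ (j,k) \<ge> 0" using t' by blast
  have tc: "\<tau> \<in> carrier_mat n n" using spp_parts(1)[OF sp] .
  have vals: "\<tau> $$ (j,k) \<in> {-1,0,1}" if "j < n" "k < n" for j k
    using spp_vals[OF sp that] .
  have ru: "k = l" if "j < n" "k < n" "l < n" "\<tau> $$ (j,k) \<noteq> 0" "\<tau> $$ (j,l) \<noteq> 0" for j k l
    using spp_row[OF sp that] .
  have symt: "\<tau> $$ (j,k) = \<tau> $$ (k,j)" if "j < n" "k < n" for j k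
  proof -
    have "\<tau> $$ (j,k) = transpose_mat \<tau> $$ (j,k)" using tr by simp
    also have "\<dots> = \<tau> $$ (k,j)" using tc that by simp
    finally show ?thesis .
  qed
  have Zi: "?Z $$ (j,k) = of_int (\<tau> $$ (j,k))" if "j < n" "k < n" for j k using tc that by simp
  have Zc: "?Z \<in> carrier_mat n n" using tc by simp
  have cs: "csym n ?Z" unfolding csym_def
  proof (intro conjI allI impI Zc)
    fix j l assume jl: "j < n" "l < n"
    have "?Z $$ (l,j) \<in> {-1,0,1}" using Zi[OF jl(2,1)] vals[OF jl(2,1)] by auto
    then have "cj (?Z $$ (l,j)) = ?Z $$ (l,j)" by auto
    then show "?Z $$ (j,l) = cj (?Z $$ (l,j))" using Zi[OF jl] Zi[OF jl(2,1)] symt[OF jl] by simp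
  qed
  have rd: "red n 0 ?Z" unfolding red_def
  proof (intro conjI allI impI)
    fix j k assume a: "0 \<le> j" "j < n" "0 \<le> k" "k < n"
    show "?Z $$ (j,k) \<in> {-1,0,1}" using Zi[of j k] vals[of j k] a by auto
  next
    fix j k assume a: "0 \<le> j" "j < n" "0 \<le> k" "k < n" "j \<noteq> k"
    have "\<tau> $$ (j,k) \<in> {0,1}" using vals[of j k] pos[of j k] a by auto
    then show "?Z $$ (j,k) \<in> {0,1}" using Zi[of j k] a by auto
  next
    fix j k l assume a: "0 \<le> j" "j < n" "0 \<le> k" "k < n" "0 \<le> l" "l < n" "?Z $$ (j,k) \<noteq> 0" "?Z $$ (j,l) \<noteq> 0"
    have "\<tau> $$ (j,k) \<noteq> 0" "\<tau> $$ (j,l) \<noteq> 0" using a Zi[of j k] Zi[of j l] by auto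
    then show "k = l" using ru[of j k l] a by simp
  qed
  show ?thesis using cs rd by simp
qed

lemma canon_spi:
  fixes w :: "'a::conjugatable_field mat"
  assumes H4: "(1::'a) \<noteq> -1" and w: "csym n w" "red n 0 w"
  shows "\<exists>\<tau>\<in>SPI_plus n. map_mat of_int \<tau> = w"
proof -
  define \<tau> :: "int mat" where "\<tau> = mat n n (\<lambda>(j,k). if w $$ (j,k) = 1 then 1 else if w $$ (j,k) = -1 then -1 else 0)"
  have wc: "w \<in> carrier_mat n n" using w(1) by (rule csym_carrier)
  have tc: "\<tau> \<in> carrier_mat n n" unfolding \<tau>_def by simp
  have ti: "\<tau> $$ (j,k) = (if w $$ (j,k) = 1 then 1 else if w $$ (j,k) = -1 then -1 else 0)" if "j < n" "k < n" for j k
    unfolding \<tau>_def using that by simp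
  have wv: "w $$ (j,k) \<in> {-1,0,1}" if "j < n" "k < n" for j k using red_vals[OF w(2), of j k] that by simp
  have m1: "(-1::'a) \<noteq> 1" using H4 by metis
  have of: "of_int (\<tau> $$ (j,k)) = w $$ (j,k)" if "j < n" "k < n" for j k
    using wv[OF that] ti[OF that] m1 by auto
  have nz: "\<tau> $$ (j,k) \<noteq> 0 \<longleftrightarrow> w $$ (j,k) \<noteq> 0" if "j < n" "k < n" for j k
    using wv[OF that] ti[OF that] m1 by auto
  have eq: "map_mat of_int \<tau> = w"
    by (rule eq_matI) (use tc wc of in auto)
  have sp: "signed_partial_perm n \<tau>" unfolding signed_partial_perm_def
  proof (intro conjI allI impI tc)
    fix j k assume a: "j < n" "k < n"
    show "\<tau> $$ (j,k) \<in> {-1,0,1}" using ti[OF a] by auto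
  next
    fix j k l assume a: "j < n" "k < n" "l < n" "\<tau> $$ (j,k) \<noteq> 0 \<and> \<tau> $$ (j,l) \<noteq> 0"
    then show "k = l" using red_uniq[OF w(2), of j k l] nz[of j k] nz[of j l] by auto
  next
    fix j k l assume a: "j < n" "k < n" "l < n" "\<tau> $$ (j,k) \<noteq> 0 \<and> \<tau> $$ (l,k) \<noteq> 0"
    then show "j = l" using col_uniq[OF w, of j l k] nz[of j k] nz[of l k] by auto
  qed
  have tr: "transpose_mat \<tau> = \<tau>"
  proof (rule eq_matI)
    fix j k assume "j < dim_row \<tau>" "k < dim_col \<tau>"
    then have a: "j < n" "k < n" using tc by auto
    have "w $$ (k,j) = w $$ (j,k)" using csym_real[OF w(1) a(2) a(1) wv[OF a(2,1)]] by simp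
    then show "transpose_mat \<tau> $$ (j,k) = \<tau> $$ (j,k)" using a tc ti[OF a] ti[OF a(2,1)] by simp
  qed (use tc in auto)
  have pos: "\<tau> $$ (j,k) \<ge> 0" if "j < n" "k < n" "j \<noteq> k" for j k
  proof -
    have "w $$ (j,k) \<in> {0,1}" using red_off[OF w(2), of j k] that by simp
    then show ?thesis using ti[OF that(1,2)] m1 by auto
  qed
  have "\<tau> \<in> SPI_plus n" unfolding SPI_plus_def SPI_def using sp tr pos by auto
  then show ?thesis using eq by blast
qed

lemma map_of_int_inj:
  assumes H4: "(1::'a::ring_1) \<noteq> -1" and t: "\<tau> \<in> SPI_plus n" "\<tau>' \<in> SPI_plus n"
    and e: "(map_mat of_int \<tau> :: 'a mat) = map_mat of_int \<tau>'"
  shows "\<tau> = \<tau>'"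
proof -
  have sp: "signed_partial_perm n \<tau>" "signed_partial_perm n \<tau>'"
    using t unfolding SPI_plus_def SPI_def by blast+
  have tc: "\<tau> \<in> carrier_mat n n" "\<tau>' \<in> carrier_mat n n"
    using spp_parts(1)[OF sp(1)] spp_parts(1)[OF sp(2)] .
  have vals: "\<tau> $$ (j,k) \<in> {-1,0,1}" "\<tau>' $$ (j,k) \<in> {-1,0,1}" if "j < n" "k < n" for j k
    using spp_vals[OF sp(1) that] spp_vals[OF sp(2) that] .
  have m1: "(-1::'a) \<noteq> 1" using H4 by auto
  have m2: "(1::'a) \<noteq> 0" "(-1::'a) \<noteq> 0" using H4 by auto
  show ?thesis
  proof (rule eq_matI)
    fix j k assume "j < dim_row \<tau>'" "k < dim_col \<tau>'"
    then have a: "j < n" "k < n" using tc by auto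
    have "(of_int (\<tau> $$ (j,k)) :: 'a) = of_int (\<tau>' $$ (j,k))"
      using arg_cong[OF e, of "\<lambda>M. M $$ (j,k)"] a tc by simp
    then show "\<tau> $$ (j,k) = \<tau>' $$ (j,k)" using vals[OF a] m1 m2 H4 by auto
  qed (use tc in auto)
qed



lemma gen_bij:
  assumes H1: "\<And>a::'a::conjugatable_field. cj a = a \<Longrightarrow> a \<noteq> 0 \<Longrightarrow> \<exists>p. p \<noteq> 0 \<and> (p * a * cj p = 1 \<or> p * a * cj p = -1)"
    and H2: "\<And>a::'a. cj a = a \<Longrightarrow> \<exists>t. a + t + cj t = 0"
    and H3: "\<And>p::'a. p \<noteq> 0 \<Longrightarrow> p * cj p \<noteq> -1"
    and H4: "(1::'a) \<noteq> -1"
  shows "bij_betw (\<lambda>\<tau>. orb n (map_mat of_int \<tau> :: 'a mat)) (SPI_plus n) (orb n ` {z. csym n z})"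
  unfolding bij_betw_def
proof (intro conjI)
  show "inj_on (\<lambda>\<tau>. orb n (map_mat of_int \<tau> :: 'a mat)) (SPI_plus n)"
  proof (rule inj_onI)
    fix \<tau> \<tau>' assume t: "\<tau> \<in> SPI_plus n" "\<tau>' \<in> SPI_plus n"
      and e: "orb n (map_mat of_int \<tau> :: 'a mat) = orb n (map_mat of_int \<tau>')"
    let ?Z = "map_mat of_int \<tau> :: 'a mat" and ?Z' = "map_mat of_int \<tau>' :: 'a mat"
    have c1: "csym n ?Z" "red n 0 ?Z" using spi_canon[OF t(1)] by auto
    have c2: "csym n ?Z'" "red n 0 ?Z'" using spi_canon[OF t(2)] by auto
    have "?Z' \<in> orb n ?Z'" by (rule orb_self[OF csym_carrier[OF c2(1)]])
    then have "?Z' \<in> orb n ?Z" using e by simp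
    then obtain b where b: "b \<in> borel_mats n" "?Z' = b * ?Z * mat_adjoint b" unfolding orb_def by blast
    have "?Z = ?Z'" by (rule canon_unique[OF H3 c1 c2 b])
    then show "\<tau> = \<tau>'" by (rule map_of_int_inj[OF H4 t])
  qed
  show "(\<lambda>\<tau>. orb n (map_mat of_int \<tau> :: 'a mat)) ` SPI_plus n = orb n ` {z. csym n z}"
  proof
    show "(\<lambda>\<tau>. orb n (map_mat of_int \<tau> :: 'a mat)) ` SPI_plus n \<subseteq> orb n ` {z. csym n z}"
    proof
      fix Ob :: "'a mat set" assume "Ob \<in> (\<lambda>\<tau>. orb n (map_mat of_int \<tau> :: 'a mat)) ` SPI_plus n"
      then obtain \<tau> where t: "\<tau> \<in> SPI_plus n" "Ob = orb n (map_mat of_int \<tau> :: 'a mat)" by blast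
      have "csym n (map_mat of_int \<tau> :: 'a mat)" using spi_canon[OF t(1)] by auto
      then show "Ob \<in> orb n ` {z. csym n z}" using t(2) by blast
    qed
    show "orb n ` {z. csym n z} \<subseteq> (\<lambda>\<tau>. orb n (map_mat of_int \<tau> :: 'a mat)) ` SPI_plus n"
    proof
      fix Ob :: "'a mat set" assume "Ob \<in> orb n ` {z. csym n z}"
      then obtain z where z: "csym n z" "Ob = orb n z" by blast
      obtain b where b: "b \<in> borel_mats n" "csym n (b * z * mat_adjoint b)" "red n 0 (b * z * mat_adjoint b)"
        using reduction0[OF H1 H2 z(1)] by blast
      obtain \<tau> where t: "\<tau> \<in> SPI_plus n" "map_mat of_int \<tau> = b * z * mat_adjoint b"
        using canon_spi[OF H4 b(2) b(3)] by blast
      have "Ob = orb n (map_mat of_int \<tau> :: 'a mat)"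
        unfolding z(2) t(2) by (rule orb_act[OF b(1) csym_carrier[OF z(1)], symmetric])
      then show "Ob \<in> (\<lambda>\<tau>. orb n (map_mat of_int \<tau> :: 'a mat)) ` SPI_plus n" using t(1) by blast
    qed
  qed
qed

lemma real_H1: "(r::real) \<noteq> 0 \<Longrightarrow> \<exists>p. p \<noteq> 0 \<and> (p * r * p = 1 \<or> p * r * p = -1)"
proof -
  assume r: "r \<noteq> 0"
  define p where "p = 1 / sqrt \<bar>r\<bar>"
  have p0: "p \<noteq> 0" using r unfolding p_def by simp
  have pp: "p * p = 1 / \<bar>r\<bar>" unfolding p_def by (simp add: field_simps)
  have "p * r * p = r * (p * p)" by (simp add: algebra_simps)
  then have "p * r * p = r / \<bar>r\<bar>" using pp by simp
  then have "p * r * p = 1 \<or> p * r * p = -1" using r by (cases "r > 0") auto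
  then show ?thesis using p0 by blast
qed

lemma real_bij: "bij_betw (\<lambda>\<tau>. orb n (map_mat of_int \<tau> :: real mat)) (SPI_plus n) (orb n ` {z. csym n z})"
proof (rule gen_bij)
  show "\<exists>p. p \<noteq> 0 \<and> (p * a * cj p = 1 \<or> p * a * cj p = -1)" if "cj a = a" "a \<noteq> 0" for a :: real
    using real_H1[OF that(2)] by simp
  show "\<exists>t. a + t + cj t = 0" for a :: real by (intro exI[of _ "- a / 2"]) simp
  show "p * cj p \<noteq> -1" if "p \<noteq> 0" for p :: real
  proof
    assume "p * cj p = -1"
    then have "p * p = -1" by simp
    moreover have "p * p \<ge> 0" by simp
    ultimately show False by linarith
  qed
qed simp

lemma complex_bij: "bij_betw (\<lambda>\<tau>. orb n (map_mat of_int \<tau> :: complex mat)) (SPI_plus n) (orb n ` {z. csym n z})"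
proof (rule gen_bij)
  show "\<exists>p. p \<noteq> 0 \<and> (p * a * cj p = 1 \<or> p * a * cj p = -1)" if "cj a = a" "a \<noteq> 0" for a :: complex
  proof -
    have "Im a = 0" using that(1) by (simp add: complex_eq_iff)
    then have ar: "a = complex_of_real (Re a)" by (simp add: complex_eq_iff)
    have "Re a \<noteq> 0" using that(2) ar by auto
    then obtain p where p: "p \<noteq> 0" "p * Re a * p = 1 \<or> p * Re a * p = -1" using real_H1 by blast
    have e: "complex_of_real p * a * cj (complex_of_real p) = complex_of_real (p * Re a * p)"
      by (subst ar) simp
    have "complex_of_real (p * Re a * p) = 1 \<or> complex_of_real (p * Re a * p) = -1"
      using p(2) by (metis of_real_1 of_real_minus)
    then have "complex_of_real p * a * cj (complex_of_real p) = 1 \<or> complex_of_real p * a * cj (complex_of_real p) = -1"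
      unfolding e .
    moreover have "complex_of_real p \<noteq> 0" using p(1) by simp
    ultimately show ?thesis by blast
  qed
  show "\<exists>t. a + t + cj t = 0" if "cj a = a" for a :: complex
  proof (intro exI[of _ "- a / 2"])
    have "cj (- a / 2) = - a / 2" using that by simp
    then show "a + - a / 2 + cj (- a / 2) = 0" by simp
  qed
  show "p * cj p \<noteq> -1" if "p \<noteq> 0" for p :: complex
  proof
    assume "p * cj p = -1"
    then have "complex_of_real ((Re p)\<^sup>2 + (Im p)\<^sup>2) = -1" using complex_mult_cnj[of p] by simp
    then have "(Re p)\<^sup>2 + (Im p)\<^sup>2 = -1" by (metis of_real_eq_iff of_real_minus of_real_1)
    moreover have "(Re p)\<^sup>2 + (Im p)\<^sup>2 \<ge> 0" by simp
    ultimately show False by simp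
  qed
qed simp



lemma herm_orbit_eq: "herm_orbit m = orb m"
  unfolding herm_orbit_def orb_def by (rule ext) simp

lemma herm_mats_eq: "herm_mats m = {z. csym m z}"
  unfolding herm_mats_def csym_iff by blast

lemma adj_real: "mat_adjoint (b::real mat) = transpose_mat b"
  by (rule eq_matI) auto

lemma sym_orbit_eq: "sym_orbit m = orb m"
  unfolding sym_orbit_def orb_def adj_real by (rule ext) simp

lemma sym_mats_eq: "sym_mats m = {z. csym m z}"
  unfolding sym_mats_def csym_iff adj_real by blast

theorem proposition3p14:
  fixes m :: nat
  shows "bij_betw (\<lambda>\<tau>. herm_orbit m (map_mat of_int \<tau>)) (SPI_plus m) (herm_orbit_space m)
       \<and> bij_betw (\<lambda>\<tau>. sym_orbit m (map_mat of_int \<tau>)) (SPI_plus m) (sym_orbit_space m)"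
  unfolding herm_orbit_space_def sym_orbit_space_def herm_orbit_eq sym_orbit_eq herm_mats_eq sym_mats_eq
  using complex_bij[of m] real_bij[of m] by blast



end
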